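(* Let $u$ be a smooth solution of the problem below on $[0,T)$ with smooth initial data $u_0$, under either periodic or Dirichlet boundary conditions, and let $\eta$ be the solution of $\dot\eta(t)=\bar{\mathcal K}_0(t)^{-2}$, $\eta(0)=0$. Then for all $t\in[0,T)$ and $\alpha\in[0,1]$, $$u_{xx}(\gamma(\alpha,t),t)=u_0''(\alpha)\,\gamma_\alpha(\alpha,t)=\frac{u_0''(\alpha)}{\mathcal J(\alpha,t)}\left(\int_0^1\frac{d\beta}{\mathcal J(\beta,t)}\right)^{-1},$$ and $$u_{xxx}(\gamma(\alpha,t),t)=u_0'''(\alpha)+\eta(t)\,\frac{u_0''(\alpha)^2}{\mathcal J(\alpha,t)}.$$ In particular, as long as the solution exists, the sign of $u_{xx}$ along each Lagrangian trajectory equals the sign of $u_0''(\alpha)$ (the initial concavity profile is preserved).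
   Context: The problem: $u_{xt}+u u_{xx}-u_x^2=-2\int_0^1 u_x^2\,dx$ for $t>0$, $x\in[0,1]$, $u(x,0)=u_0(x)$, with either periodic boundary conditions $u(0,t)=u(1,t)$, $u_x(0,t)=u_x(1,t)$ or Dirichlet boundary conditions $u(0,t)=u(1,t)=0$. The Lagrangian flow $\gamma(\alpha,t)$ is defined by $\dot\gamma(\alpha,t)=u(\gamma(\alpha,t),t)$, $\gamma(\alpha,0)=\alpha$, and $\gamma_\alpha=\partial\gamma/\partial\alpha$. Given $\eta(t)$, define $\mathcal J(\alpha,t)=1-\eta(t)u_0'(\alpha)$ and $\bar{\mathcal K}_0(t)=\int_0^1\mathcal J(\alpha,t)^{-1}\,d\alpha$. *)

theory Defs
  imports "HOL-Analysis.Analysis"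
begin

text \<open>A family D of functions of (x,t) is a C-infinity family on S when D i j is the
  partial derivative of order i in x and order j in t of D 0 0:
  each D i j is continuous on S and differentiable within S with x-derivative
  D (i+1) j and t-derivative D i (j+1).\<close>
definition smooth_family :: "(real \<times> real) set \<Rightarrow> (nat \<Rightarrow> nat \<Rightarrow> real \<Rightarrow> real \<Rightarrow> real) \<Rightarrow> bool" where
  "smooth_family S D \<longleftrightarrow>
     (\<forall>i j. continuous_on S (\<lambda>p. D i j (fst p) (snd p)) \<and>
        (\<forall>p\<in>S. ((\<lambda>q. D i j (fst q) (snd q)) has_derivative
                  (\<lambda>h. D (Suc i) j (fst p) (snd p) * fst h + D i (Suc j) (fst p) (snd p) * snd h))
                 (at p within S)))"

definition JJ :: "(real \<Rightarrow> real) \<Rightarrow> (real \<Rightarrow> real) \<Rightarrow> real \<Rightarrow> real \<Rightarrow> real" where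
  "JJ \<eta> u0' \<alpha> t = 1 - \<eta> t * u0' \<alpha>"

definition Kbar0 :: "(real \<Rightarrow> real) \<Rightarrow> (real \<Rightarrow> real) \<Rightarrow> real \<Rightarrow> real" where
  "Kbar0 \<eta> u0' t = integral {0..1} (\<lambda>\<alpha>. 1 / JJ \<eta> u0' \<alpha> t)"

end

theory Submission
  imports Defs
begin



lemma nontriv_Icc: fixes a b x :: real assumes "a < b" "x \<in> {a..b}" shows "at x within {a..b} \<noteq> bot"
  using assms by (simp add: trivial_limit_within islimpt_Icc)

lemma nontriv_Ico: fixes a b x :: real assumes "x \<in> {a..<b}" shows "at x within {a..<b} \<noteq> bot"
  using assms by (simp add: trivial_limit_within)

lemma gronwall:
  fixes E E' :: "real \<Rightarrow> real"
  assumes "0 \<le> b" "0 \<le> A" "0 \<le> B" "continuous_on {0..b} E"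
    and d: "\<And>s. 0 < s \<Longrightarrow> s < b \<Longrightarrow> (E has_real_derivative E' s) (at s)"
    and le: "\<And>s. 0 < s \<Longrightarrow> s < b \<Longrightarrow> E' s \<le> A * E s + B"
  shows "E b \<le> exp (A * b) * (E 0 + B * b)"
proof -
  define \<psi> where "\<psi> s = exp (- A * s) * E s - B * s" for s
  have "\<psi> b \<le> \<psi> 0"
  proof (rule DERIV_nonpos_imp_decreasing_open[OF \<open>0 \<le> b\<close>])
    fix s assume s: "0 < s" "s < b"
    have "(\<psi> has_real_derivative (- A * exp (- A * s) * E s + exp (- A * s) * E' s - B)) (at s)"
      unfolding \<psi>_def by (auto intro!: derivative_eq_intros d s)
    moreover have "- A * exp (- A * s) * E s + exp (- A * s) * E' s - B \<le> 0"
    proof -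
      have "exp (- A * s) * E' s \<le> exp (- A * s) * (A * E s + B)" using le[OF s] by simp
      moreover have "exp (- A * s) \<le> 1" using \<open>0 \<le> A\<close> s by simp
      hence "exp (- A * s) * B \<le> B" using \<open>0 \<le> B\<close> by (simp add: mult_left_le_one_le)
      ultimately show ?thesis by (simp add: algebra_simps)
    qed
    ultimately show "\<exists>y. (\<psi> has_real_derivative y) (at s) \<and> y \<le> 0" by blast
  next
    show "continuous_on {0..b} \<psi>" unfolding \<psi>_def
      by (intro continuous_intros assms(4))
  qed
  hence "exp (- A * b) * E b \<le> E 0 + B * b" by (simp add: \<psi>_def)
  hence "exp (A * b) * (exp (- A * b) * E b) \<le> exp (A * b) * (E 0 + B * b)" by simp
  thus ?thesis by (simp add: exp_minus field_simps)
qed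



lemma sf_chain:
  assumes sf: "smooth_family S D"
    and inS: "\<And>r. r \<in> U \<Longrightarrow> (c1 r, c2 r) \<in> S" and r: "r \<in> U"
    and d1: "(c1 has_real_derivative d1) (at r within U)"
    and d2: "(c2 has_real_derivative d2) (at r within U)"
  shows "((\<lambda>r. D i j (c1 r) (c2 r)) has_real_derivative
           (D (Suc i) j (c1 r) (c2 r) * d1 + D i (Suc j) (c1 r) (c2 r) * d2)) (at r within U)"
proof -
  have f: "((\<lambda>r. (c1 r, c2 r)) has_derivative (\<lambda>h. (h * d1, h * d2))) (at r within U)"
    using has_derivative_Pair[OF d1[unfolded has_field_derivative_def] d2[unfolded has_field_derivative_def]]
    by (simp add: mult.commute)
  have g: "((\<lambda>q. D i j (fst q) (snd q)) has_derivative
      (\<lambda>h. D (Suc i) j (c1 r) (c2 r) * fst h + D i (Suc j) (c1 r) (c2 r) * snd h)) (at (c1 r, c2 r) within S)"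
  proof -
    have "\<forall>p\<in>S. ((\<lambda>q. D i j (fst q) (snd q)) has_derivative
                  (\<lambda>h. D (Suc i) j (fst p) (snd p) * fst h + D i (Suc j) (fst p) (snd p) * snd h))
                 (at p within S)" using sf unfolding smooth_family_def by blast
    from bspec[OF this inS[OF r]] show ?thesis by simp
  qed
  have g': "((\<lambda>q. D i j (fst q) (snd q)) has_derivative
      (\<lambda>h. D (Suc i) j (c1 r) (c2 r) * fst h + D i (Suc j) (c1 r) (c2 r) * snd h)) (at (c1 r, c2 r) within (\<lambda>r. (c1 r, c2 r)) ` U)"
    by (rule has_derivative_subset[OF g]) (use inS in auto)
  have "((\<lambda>x. D i j (c1 x) (c2 x)) has_derivative (\<lambda>x. D (Suc i) j (c1 r) (c2 r) * (x*d1) + D i (Suc j) (c1 r) (c2 r) * (x*d2))) (at r within U)"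
    using has_derivative_in_compose[OF f g'] by simp
  then show ?thesis unfolding has_field_derivative_def
    by (rule has_derivative_eq_rhs) (simp add: fun_eq_iff algebra_simps)
qed

lemma sf_cont:
  assumes sf: "smooth_family S D"
  shows "continuous_on S (\<lambda>p. D i j (fst p) (snd p))"
  using sf unfolding smooth_family_def by blast



locale lag =
  fixes D :: "nat \<Rightarrow> nat \<Rightarrow> real \<Rightarrow> real \<Rightarrow> real" and \<gamma> :: "real \<Rightarrow> real \<Rightarrow> real"
    and X :: "real set" and T :: real
  assumes sf: "smooth_family (X \<times> {0..<T}) D"
    and convX: "convex X" and unitX: "{0..1} \<subseteq> X"
    and pdeX: "\<And>x s. x \<in> X \<Longrightarrow> s \<in> {0<..<T} \<Longrightarrow>
       D 1 1 x s + D 0 0 x s * D 2 0 x s - (D 1 0 x s)\<^sup>2 = - 2 * integral {0..1} (\<lambda>y. (D 1 0 y s)\<^sup>2)"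
    and flow0: "\<And>a. a \<in> {0..1} \<Longrightarrow> \<gamma> a 0 = a"
    and flowd: "\<And>a s. a \<in> {0..1} \<Longrightarrow> s \<in> {0..<T} \<Longrightarrow>
       (\<gamma> a has_real_derivative D 0 0 (\<gamma> a s) s) (at s within {0..<T})"
    and flowX: "\<And>a s. a \<in> {0..1} \<Longrightarrow> s \<in> {0..<T} \<Longrightarrow> \<gamma> a s \<in> X"
    and bnd: "\<And>b. 0 \<le> b \<Longrightarrow> b < T \<Longrightarrow> \<exists>M. \<forall>x\<in>X. \<forall>s\<in>{0..b}. \<bar>D 1 0 x s\<bar> \<le> M \<and> \<bar>D 2 0 x s\<bar> \<le> M"
begin

lemma xderiv:
  assumes "x \<in> X" "s \<in> {0..<T}"
  shows "((\<lambda>z. D i j z s) has_real_derivative D (Suc i) j x s) (at x within X)"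
  using sf_chain[OF sf, of X "\<lambda>z. z" "\<lambda>z. s" x 1 0 i j] assms
  by (auto intro!: derivative_eq_intros)

lemma xderiv_comp:
  assumes "\<And>r. r \<in> U \<Longrightarrow> c r \<in> X" "s \<in> {0..<T}" "r \<in> U"
    "(c has_real_derivative d) (at r within U)"
  shows "((\<lambda>r. D i j (c r) s) has_real_derivative D (Suc i) j (c r) s * d) (at r within U)"
  using sf_chain[OF sf, of U c "\<lambda>z. s" r d 0 i j] assms
  by (auto intro!: derivative_eq_intros)

lemma tderiv_traj:
  assumes "a \<in> {0..1}" "s \<in> {0..<T}"
  shows "((\<lambda>r. D i j (\<gamma> a r) r) has_real_derivative
     (D (Suc i) j (\<gamma> a s) s * D 0 0 (\<gamma> a s) s + D i (Suc j) (\<gamma> a s) s)) (at s within {0..<T})"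
  using sf_chain[OF sf, of "{0..<T}" "\<gamma> a" "\<lambda>r. r" s "D 0 0 (\<gamma> a s) s" 1 i j] assms flowX flowd
  by (auto intro!: derivative_eq_intros)

lemma cont_traj:
  assumes "a \<in> {0..1}"
  shows "continuous_on {0..<T} (\<lambda>r. D i j (\<gamma> a r) r)"
  using tderiv_traj[OF assms] DERIV_continuous continuous_on_eq_continuous_within by blast

lemma cont_gamma:
  assumes "a \<in> {0..1}"
  shows "continuous_on {0..<T} (\<gamma> a)"
  using flowd[OF assms] DERIV_continuous continuous_on_eq_continuous_within by blast

lemma lip_gen:
  assumes s: "s \<in> {0..<T}" and M: "\<And>z. z \<in> X \<Longrightarrow> \<bar>D (Suc i) 0 z s\<bar> \<le> M"
    and xy: "x \<in> X" "y \<in> X"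
  shows "\<bar>D i 0 y s - D i 0 x s\<bar> \<le> M * \<bar>y - x\<bar>"
  using field_differentiable_bound[OF convX, of "\<lambda>z. D i 0 z s" "\<lambda>z. D (Suc i) 0 z s" M y x]
    xderiv[OF _ s] M xy by auto

lemma rem:
  assumes s: "s \<in> {0..<T}" and M: "\<And>z. z \<in> X \<Longrightarrow> \<bar>D 2 0 z s\<bar> \<le> M"
    and xy: "x \<in> X" "y \<in> X"
  shows "\<bar>D 0 0 y s - D 0 0 x s - D 1 0 x s * (y - x)\<bar> \<le> M * (y - x)\<^sup>2"
proof -
  have seg: "closed_segment x y \<subseteq> X" using convX xy convex_contains_segment by blast
  have "norm ((D 0 0 y s - D 1 0 x s * y) - (D 0 0 x s - D 1 0 x s * x)) \<le> (M * \<bar>y - x\<bar>) * norm (y - x)"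
  proof (rule field_differentiable_bound[of "closed_segment x y" "\<lambda>z. D 0 0 z s - D 1 0 x s * z"
        "\<lambda>z. D 1 0 z s - D 1 0 x s"])
    show "convex (closed_segment x y)" by simp
    fix z assume z: "z \<in> closed_segment x y"
    hence zX: "z \<in> X" using seg by blast
    show "((\<lambda>z. D 0 0 z s - D 1 0 x s * z) has_field_derivative D 1 0 z s - D 1 0 x s) (at z within closed_segment x y)"
      using has_field_derivative_subset[OF xderiv[OF zX s, of 0 0] seg]
      by (auto intro!: derivative_eq_intros)
    have "\<bar>D 1 0 z s - D 1 0 x s\<bar> \<le> M * \<bar>z - x\<bar>"
      using lip_gen[OF s _ xy(1) zX, where i=1 and M=M] M by (simp add: numeral_2_eq_2)
    also have "\<dots> \<le> M * \<bar>y - x\<bar>"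
    proof -
      have "0 \<le> M" using M[OF xy(1)] by linarith
      moreover have "\<bar>z - x\<bar> \<le> \<bar>y - x\<bar>" using segment_bound(1)[OF z] by simp
      ultimately show ?thesis by (simp add: mult_left_mono)
    qed
    finally show "norm (D 1 0 z s - D 1 0 x s) \<le> M * \<bar>y - x\<bar>" by simp
  qed auto
  thus ?thesis by (simp add: power2_eq_square algebra_simps)
qed

end


lemma at_Icc_Ico: fixes s b T :: real
  assumes "0 \<le> s" "s < b" "s < T"
  shows "at s within {0..b} = at s within {0..<T}"
  by (rule at_within_nhd[where S="{s - 1 <..< min b T}"]) (use assms in auto)

lemma at_Ico_interior: fixes s T :: real
  assumes "0 < s" "s < T"
  shows "at s within {0..<T} = at s"
  by (rule at_within_interior) (use assms in auto)

lemma mult_le_abs: "(x::real) * y \<le> \<bar>x\<bar> * \<bar>y\<bar>"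
  by (metis abs_ge_self abs_mult)

context lag begin

definition U1 where "U1 a s = D 1 0 (\<gamma> a s) s"
definition w where "w a s = exp (integral {0..s} (U1 a))"

lemma U1_cont: "a \<in> {0..1} \<Longrightarrow> continuous_on {0..<T} (U1 a)"
  unfolding U1_def using cont_traj by blast

lemma w_deriv:
  assumes a: "a \<in> {0..1}" and s: "s \<in> {0..<T}"
  shows "(w a has_real_derivative U1 a s * w a s) (at s within {0..<T})"
proof -
  define b where "b = (s + T) / 2"
  have sb: "s < b" "b < T" "0 \<le> s" using s by (auto simp: b_def)
  have c: "continuous_on {0..b} (U1 a)"
    by (rule continuous_on_subset[OF U1_cont[OF a]]) (use sb in auto)
  have "((\<lambda>x. integral {0..x} (U1 a)) has_real_derivative U1 a s) (at s within {0..b})"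
    by (rule integral_has_real_derivative[OF c]) (use sb in auto)
  hence "(w a has_real_derivative exp (integral {0..s} (U1 a)) * U1 a s) (at s within {0..b})"
    unfolding w_def[abs_def] by (rule DERIV_chain2[OF DERIV_exp])
  moreover have "at s within {0..b} = at s within {0..<T}" by (rule at_Icc_Ico) (use sb in auto)
  ultimately show ?thesis by (simp add: w_def mult.commute)
qed

lemma w0: "w a 0 = 1" by (simp add: w_def)
lemma w_pos: "w a s > 0" by (simp add: w_def)

lemma w_cont: "a \<in> {0..1} \<Longrightarrow> continuous_on {0..<T} (w a)"
  using w_deriv DERIV_continuous continuous_on_eq_continuous_within by blast

lemma int_U1_bound:
  assumes a: "a \<in> {0..1}" and s: "0 \<le> s" "s < T"
    and M: "\<And>x r. x \<in> X \<Longrightarrow> r \<in> {0..s} \<Longrightarrow> \<bar>D 1 0 x r\<bar> \<le> M"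
  shows "\<bar>integral {0..s} (U1 a)\<bar> \<le> M * s"
proof -
  have "norm (integral {0..s} (U1 a)) \<le> M * (s - 0)"
  proof (rule integral_bound)
    show "continuous_on {0..s} (U1 a)"
      by (rule continuous_on_subset[OF U1_cont[OF a]]) (use s in auto)
    fix r assume r: "r \<in> {0..s}"
    hence "\<gamma> a r \<in> X" using flowX[OF a] s by auto
    thus "norm (U1 a r) \<le> M" using M r by (simp add: U1_def)
  qed (use s in auto)
  thus ?thesis by simp
qed

lemma deriv_at:
  assumes "(f has_real_derivative f') (at s within {0..<T})" "0 < s" "s < T"
  shows "(f has_real_derivative f') (at s)"
  using assms at_Ico_interior by metis

lemma delta_bound:
  assumes a: "a \<in> {0..1}" and \<beta>: "\<beta> \<in> {0..1}" and t: "0 \<le> t" "t < T"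
    and M: "\<And>x r. x \<in> X \<Longrightarrow> r \<in> {0..t} \<Longrightarrow> \<bar>D 1 0 x r\<bar> \<le> M \<and> \<bar>D 2 0 x r\<bar> \<le> M"
    and s: "s \<in> {0..t}"
  shows "(\<gamma> \<beta> s - \<gamma> a s)\<^sup>2 \<le> exp (2 * M * s) * (\<beta> - a)\<^sup>2"
proof -
  have M0: "0 \<le> M" using M[of 0 0] unitX t by force
  have "(\<gamma> \<beta> s - \<gamma> a s)\<^sup>2 \<le> exp ((2 * M) * s) * ((\<gamma> \<beta> 0 - \<gamma> a 0)\<^sup>2 + 0 * s)"
  proof (rule gronwall[where E="\<lambda>s. (\<gamma> \<beta> s - \<gamma> a s)\<^sup>2"
      and E'="\<lambda>r. 2 * (\<gamma> \<beta> r - \<gamma> a r) * (D 0 0 (\<gamma> \<beta> r) r - D 0 0 (\<gamma> a r) r)"])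
    show "continuous_on {0..s} (\<lambda>s. (\<gamma> \<beta> s - \<gamma> a s)\<^sup>2)"
      by (intro continuous_intros continuous_on_subset[OF cont_gamma[OF \<beta>]]
          continuous_on_subset[OF cont_gamma[OF a]]) (use s t in auto)
    fix r assume r: "0 < r" "r < s"
    hence rT: "0 < r" "r < T" "r \<in> {0..<T}" using s t by auto
    show "((\<lambda>s. (\<gamma> \<beta> s - \<gamma> a s)\<^sup>2) has_real_derivative
        2 * (\<gamma> \<beta> r - \<gamma> a r) * (D 0 0 (\<gamma> \<beta> r) r - D 0 0 (\<gamma> a r) r)) (at r)"
      using deriv_at[OF flowd[OF \<beta> rT(3)] rT(1,2)] deriv_at[OF flowd[OF a rT(3)] rT(1,2)]
      by (auto intro!: derivative_eq_intros)
    have rt: "r \<in> {0..t}" using r s by auto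
    have l: "\<bar>D 0 0 (\<gamma> \<beta> r) r - D 0 0 (\<gamma> a r) r\<bar> \<le> M * \<bar>\<gamma> \<beta> r - \<gamma> a r\<bar>"
      by (rule lip_gen[OF rT(3)]) (use M rt flowX[OF a rT(3)] flowX[OF \<beta> rT(3)] in auto)
    define p where "p = \<gamma> \<beta> r - \<gamma> a r"
    define q where "q = D 0 0 (\<gamma> \<beta> r) r - D 0 0 (\<gamma> a r) r"
    have lq: "\<bar>q\<bar> \<le> M * \<bar>p\<bar>" using l by (simp add: p_def q_def)
    have "p * q \<le> \<bar>p\<bar> * \<bar>q\<bar>" by (rule mult_le_abs)
    also have "\<dots> \<le> \<bar>p\<bar> * (M * \<bar>p\<bar>)" by (rule mult_left_mono[OF lq]) simp
    also have "\<dots> = M * p\<^sup>2" by (simp add: power2_eq_square abs_mult_self_eq algebra_simps)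
    finally have "p * q \<le> M * p\<^sup>2" .
    hence "2 * p * q \<le> 2 * M * p\<^sup>2 + 0" by (simp add: mult.assoc)
    thus "2 * (\<gamma> \<beta> r - \<gamma> a r) * (D 0 0 (\<gamma> \<beta> r) r - D 0 0 (\<gamma> a r) r)
        \<le> 2 * M * (\<gamma> \<beta> r - \<gamma> a r)\<^sup>2 + 0" by (simp add: p_def q_def)
  qed (use s M0 in auto)
  thus ?thesis using flow0[OF a] flow0[OF \<beta>] by simp
qed

lemma E2_bound:
  assumes a: "a \<in> {0..1}" and \<beta>: "\<beta> \<in> {0..1}" and t: "0 \<le> t" "t < T"
    and M: "\<And>x r. x \<in> X \<Longrightarrow> r \<in> {0..t} \<Longrightarrow> \<bar>D 1 0 x r\<bar> \<le> M \<and> \<bar>D 2 0 x r\<bar> \<le> M"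
  shows "(\<gamma> \<beta> t - \<gamma> a t - (\<beta> - a) * w a t)\<^sup>2
     \<le> exp ((2 * M + 1) * t) * (0 + ((M * exp (2 * M * t))\<^sup>2 * (\<beta> - a) ^ 4) * t)"
proof -
  have M0: "0 \<le> M" using M[of 0 0] unitX t by force
  define h where "h = \<beta> - a"
  define K where "K = M * exp (2 * M * t)"
  have K0: "0 \<le> K" using M0 by (simp add: K_def)
  have "(\<gamma> \<beta> t - \<gamma> a t - h * w a t)\<^sup>2
     \<le> exp ((2 * M + 1) * t) * ((\<gamma> \<beta> 0 - \<gamma> a 0 - h * w a 0)\<^sup>2 + (K\<^sup>2 * h ^ 4) * t)"
  proof (rule gronwall[where E="\<lambda>r. (\<gamma> \<beta> r - \<gamma> a r - h * w a r)\<^sup>2"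
      and E'="\<lambda>r. 2 * (\<gamma> \<beta> r - \<gamma> a r - h * w a r) *
         (D 0 0 (\<gamma> \<beta> r) r - D 0 0 (\<gamma> a r) r - h * (U1 a r * w a r))"])
    show "continuous_on {0..t} (\<lambda>r. (\<gamma> \<beta> r - \<gamma> a r - h * w a r)\<^sup>2)"
      by (intro continuous_intros continuous_on_subset[OF cont_gamma[OF \<beta>]]
          continuous_on_subset[OF cont_gamma[OF a]] continuous_on_subset[OF w_cont[OF a]]) (use t in auto)
    fix r assume r: "0 < r" "r < t"
    hence rT: "0 < r" "r < T" "r \<in> {0..<T}" using t by auto
    show "((\<lambda>r. (\<gamma> \<beta> r - \<gamma> a r - h * w a r)\<^sup>2) has_real_derivative
        2 * (\<gamma> \<beta> r - \<gamma> a r - h * w a r) *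
         (D 0 0 (\<gamma> \<beta> r) r - D 0 0 (\<gamma> a r) r - h * (U1 a r * w a r))) (at r)"
      using deriv_at[OF flowd[OF \<beta> rT(3)] rT(1,2)] deriv_at[OF flowd[OF a rT(3)] rT(1,2)]
        deriv_at[OF w_deriv[OF a rT(3)] rT(1,2)]
      by (auto intro!: derivative_eq_intros) (simp add: algebra_simps)
    have rt: "r \<in> {0..t}" using r by auto
    define p where "p = \<gamma> \<beta> r - \<gamma> a r"
    define e where "e = \<gamma> \<beta> r - \<gamma> a r - h * w a r"
    define u where "u = U1 a r"
    define R where "R = D 0 0 (\<gamma> \<beta> r) r - D 0 0 (\<gamma> a r) r - u * p"
    have xa: "\<gamma> a r \<in> X" "\<gamma> \<beta> r \<in> X" using flowX[OF a rT(3)] flowX[OF \<beta> rT(3)] by auto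
    have u: "\<bar>u\<bar> \<le> M" using M[OF xa(1) rt] by (simp add: u_def U1_def)
    have "\<bar>R\<bar> \<le> M * p\<^sup>2"
      unfolding R_def u_def U1_def p_def
      by (rule rem[OF rT(3) _ xa]) (use M rt in auto)
    also have "M * p\<^sup>2 \<le> M * (exp (2 * M * r) * h\<^sup>2)"
      using delta_bound[OF a \<beta> t M rt] M0 by (intro mult_left_mono) (auto simp: p_def h_def)
    also have "\<dots> \<le> K * h\<^sup>2"
    proof -
      have "2 * M * r \<le> 2 * M * t" using M0 r by (intro mult_left_mono) auto
      hence "exp (2 * M * r) * h\<^sup>2 \<le> exp (2 * M * t) * h\<^sup>2" by (intro mult_right_mono) auto
      hence "M * (exp (2 * M * r) * h\<^sup>2) \<le> M * (exp (2 * M * t) * h\<^sup>2)" using M0 by (rule mult_left_mono)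
      thus ?thesis by (simp add: K_def mult.assoc)
    qed
    finally have R: "\<bar>R\<bar> \<le> K * h\<^sup>2" .
    have R2: "R\<^sup>2 \<le> K\<^sup>2 * h ^ 4"
    proof -
      have "\<bar>R\<bar>\<^sup>2 \<le> (K * h\<^sup>2)\<^sup>2" by (rule power_mono[OF R]) simp
      moreover have "(K * h\<^sup>2)\<^sup>2 = K\<^sup>2 * h ^ 4" by (simp add: power_mult_distrib flip: power_mult)
      ultimately show ?thesis by simp
    qed
    have eq: "D 0 0 (\<gamma> \<beta> r) r - D 0 0 (\<gamma> a r) r - h * (U1 a r * w a r) = R + u * e"
      by (simp add: R_def u_def e_def p_def algebra_simps)
    have i1: "2 * e * R \<le> e\<^sup>2 + R\<^sup>2" using sum_squares_bound[of e R] by (simp add: power2_eq_square)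
    have i2: "u * e\<^sup>2 \<le> M * e\<^sup>2" using u by (intro mult_right_mono) auto
    have "2 * e * (R + u * e) = 2 * e * R + 2 * (u * e\<^sup>2)" by (simp add: power2_eq_square algebra_simps)
    also have "\<dots> \<le> e\<^sup>2 + K\<^sup>2 * h ^ 4 + 2 * (M * e\<^sup>2)" using i1 i2 R2 by linarith
    also have "\<dots> = (2 * M + 1) * e\<^sup>2 + K\<^sup>2 * h ^ 4" by (simp add: algebra_simps)
    finally show "2 * (\<gamma> \<beta> r - \<gamma> a r - h * w a r) *
         (D 0 0 (\<gamma> \<beta> r) r - D 0 0 (\<gamma> a r) r - h * (U1 a r * w a r))
        \<le> (2 * M + 1) * (\<gamma> \<beta> r - \<gamma> a r - h * w a r)\<^sup>2 + K\<^sup>2 * h ^ 4"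
      by (simp only: eq) (simp add: e_def)
  qed (use t M0 in auto)
  thus ?thesis using flow0[OF a] flow0[OF \<beta>] by (simp add: w0 h_def K_def)
qed

lemma gamma_deriv:
  assumes a: "a \<in> {0..1}" and t: "0 \<le> t" "t < T"
  shows "((\<lambda>\<beta>. \<gamma> \<beta> t) has_real_derivative w a t) (at a within {0..1})"
proof -
  obtain M where M: "\<And>x r. x \<in> X \<Longrightarrow> r \<in> {0..t} \<Longrightarrow> \<bar>D 1 0 x r\<bar> \<le> M \<and> \<bar>D 2 0 x r\<bar> \<le> M"
    using bnd[OF t] by blast
  define C where "C = sqrt (exp ((2 * M + 1) * t) * ((M * exp (2 * M * t))\<^sup>2 * t))"
  have C0: "0 \<le> C" unfolding C_def using t by (auto intro!: real_sqrt_ge_zero)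
  have key: "\<bar>(\<gamma> \<beta> t - \<gamma> a t) / (\<beta> - a) - w a t\<bar> \<le> C * \<bar>\<beta> - a\<bar>"
    if \<beta>: "\<beta> \<in> {0..1}" "\<beta> \<noteq> a" for \<beta>
  proof -
    have "(\<gamma> \<beta> t - \<gamma> a t - (\<beta> - a) * w a t)\<^sup>2
       \<le> exp ((2 * M + 1) * t) * ((M * exp (2 * M * t))\<^sup>2 * t) * ((\<beta> - a)\<^sup>2)\<^sup>2"
      using E2_bound[OF a \<beta>(1) t M] by (simp add: algebra_simps power_mult_distrib)
    hence "sqrt ((\<gamma> \<beta> t - \<gamma> a t - (\<beta> - a) * w a t)\<^sup>2)
       \<le> sqrt (exp ((2 * M + 1) * t) * ((M * exp (2 * M * t))\<^sup>2 * t) * ((\<beta> - a)\<^sup>2)\<^sup>2)"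
      by (rule real_sqrt_le_mono)
    moreover have "sqrt ((\<beta> - a) ^ 4) = (\<beta> - a)\<^sup>2"
    proof -
      have "(\<beta> - a) ^ 4 = ((\<beta> - a)\<^sup>2)\<^sup>2" by simp
      then show ?thesis by (simp only: real_sqrt_abs) simp
    qed
    ultimately have "\<bar>\<gamma> \<beta> t - \<gamma> a t - (\<beta> - a) * w a t\<bar> \<le> C * (\<beta> - a)\<^sup>2"
      by (simp add: C_def real_sqrt_mult)
    moreover have "(\<gamma> \<beta> t - \<gamma> a t) / (\<beta> - a) - w a t = (\<gamma> \<beta> t - \<gamma> a t - (\<beta> - a) * w a t) / (\<beta> - a)"
      using \<beta> by (simp add: field_simps)
    ultimately show ?thesis using \<beta>
      by (simp add: abs_divide divide_le_eq power2_eq_square abs_mult_self_eq mult.assoc)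
  qed
  have "((\<lambda>\<beta>. (\<gamma> \<beta> t - \<gamma> a t) / (\<beta> - a) - w a t) \<longlongrightarrow> 0) (at a within {0..1})"
  proof (rule Lim_null_comparison)
    show "\<forall>\<^sub>F x in at a within {0..1}. norm ((\<gamma> x t - \<gamma> a t) / (x - a) - w a t) \<le> C * \<bar>x - a\<bar>"
      using key by (auto simp: eventually_at_filter)
    have "((\<lambda>x. C * \<bar>x - a\<bar>) \<longlongrightarrow> C * \<bar>a - a\<bar>) (at a within {0..1})"
      by (intro tendsto_intros)
    thus "((\<lambda>x. C * \<bar>x - a\<bar>) \<longlongrightarrow> 0) (at a within {0..1})" by simp
  qed
  hence "((\<lambda>\<beta>. (\<gamma> \<beta> t - \<gamma> a t) / (\<beta> - a)) \<longlongrightarrow> w a t) (at a within {0..1})"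
    by (rule LIM_zero_cancel)
  thus ?thesis by (simp add: has_field_derivative_iff)
qed

end


lemma ode2_unique:
  fixes g G q :: "real \<Rightarrow> real"
  assumes s: "0 \<le> s" and cg: "continuous_on {0..s} g" and cG: "continuous_on {0..s} G"
    and dg: "\<And>r. 0 < r \<Longrightarrow> r < s \<Longrightarrow> (g has_real_derivative G r) (at r)"
    and dG: "\<And>r. 0 < r \<Longrightarrow> r < s \<Longrightarrow> (G has_real_derivative q r * g r) (at r)"
    and q: "\<And>r. 0 < r \<Longrightarrow> r < s \<Longrightarrow> \<bar>q r\<bar> \<le> Q"
    and g0: "g 0 = 0" and G0: "G 0 = 0"
  shows "g s = 0"
proof -
  have Q0: "0 \<le> Q" if "0 < s" using q[of "s/2"] that by auto
  have "(g s)\<^sup>2 + (G s)\<^sup>2 \<le> exp ((1 + max Q 0) * s) * (((g 0)\<^sup>2 + (G 0)\<^sup>2) + 0 * s)"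
  proof (rule gronwall[where E="\<lambda>r. (g r)\<^sup>2 + (G r)\<^sup>2" and E'="\<lambda>r. 2 * g r * G r + 2 * G r * (q r * g r)"])
    show "continuous_on {0..s} (\<lambda>r. (g r)\<^sup>2 + (G r)\<^sup>2)" by (intro continuous_intros cg cG)
    fix r assume r: "0 < r" "r < s"
    show "((\<lambda>r. (g r)\<^sup>2 + (G r)\<^sup>2) has_real_derivative 2 * g r * G r + 2 * G r * (q r * g r)) (at r)"
      using dg[OF r] dG[OF r] by (auto intro!: derivative_eq_intros)
    have i1: "2 * g r * G r \<le> (g r)\<^sup>2 + (G r)\<^sup>2" using sum_squares_bound[of "g r" "G r"] by (simp add: power2_eq_square)
    have i2: "2 * (g r * G r) \<le> (g r)\<^sup>2 + (G r)\<^sup>2" using i1 by simp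
    have i3: "- 2 * (g r * G r) \<le> (g r)\<^sup>2 + (G r)\<^sup>2" using sum_squares_bound[of "g r" "- G r"] by (simp add: power2_eq_square)
    have "2 * G r * (q r * g r) = q r * (2 * (g r * G r))" by (simp add: algebra_simps)
    also have "\<dots> \<le> \<bar>q r\<bar> * \<bar>2 * (g r * G r)\<bar>" by (rule mult_le_abs)
    also have "\<dots> \<le> max Q 0 * ((g r)\<^sup>2 + (G r)\<^sup>2)"
    proof (rule mult_mono)
      show "\<bar>q r\<bar> \<le> max Q 0" using q[OF r] by simp
      show "\<bar>2 * (g r * G r)\<bar> \<le> (g r)\<^sup>2 + (G r)\<^sup>2" using i2 i3 by (simp add: abs_le_iff)
    qed auto
    finally show "2 * g r * G r + 2 * G r * (q r * g r) \<le> (1 + max Q 0) * ((g r)\<^sup>2 + (G r)\<^sup>2) + 0"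
      using i1 by (simp add: algebra_simps)
  qed (use s in auto)
  hence "(g s)\<^sup>2 + (G s)\<^sup>2 \<le> 0" using g0 G0 by simp
  hence "(g s)\<^sup>2 \<le> 0" using zero_le_power2[of "G s"] by linarith
  thus ?thesis by simp
qed

context lag begin

lemma traj_unique:
  assumes a: "a \<in> {0..1}" and c0: "c 0 = a"
    and cX: "\<And>s. s \<in> {0..<T} \<Longrightarrow> c s \<in> X"
    and cd: "\<And>s. s \<in> {0..<T} \<Longrightarrow> (c has_real_derivative D 0 0 (c s) s) (at s within {0..<T})"
    and t: "t \<in> {0..<T}"
  shows "c t = \<gamma> a t"
proof -
  obtain M where M: "\<And>x r. x \<in> X \<Longrightarrow> r \<in> {0..t} \<Longrightarrow> \<bar>D 1 0 x r\<bar> \<le> M \<and> \<bar>D 2 0 x r\<bar> \<le> M"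
    using bnd[of t] t by fastforce
  have M0: "0 \<le> M" using M[of 0 0] unitX t by force
  have cc: "continuous_on {0..<T} c" using cd DERIV_continuous continuous_on_eq_continuous_within by blast
  have "(c t - \<gamma> a t)\<^sup>2 \<le> exp ((2 * M) * t) * ((c 0 - \<gamma> a 0)\<^sup>2 + 0 * t)"
  proof (rule gronwall[where E="\<lambda>s. (c s - \<gamma> a s)\<^sup>2"
      and E'="\<lambda>r. 2 * (c r - \<gamma> a r) * (D 0 0 (c r) r - D 0 0 (\<gamma> a r) r)"])
    show "continuous_on {0..t} (\<lambda>s. (c s - \<gamma> a s)\<^sup>2)"
      by (intro continuous_intros continuous_on_subset[OF cc]
          continuous_on_subset[OF cont_gamma[OF a]]) (use t in auto)
    fix r assume r: "0 < r" "r < t"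
    hence rT: "0 < r" "r < T" "r \<in> {0..<T}" using t by auto
    show "((\<lambda>s. (c s - \<gamma> a s)\<^sup>2) has_real_derivative
        2 * (c r - \<gamma> a r) * (D 0 0 (c r) r - D 0 0 (\<gamma> a r) r)) (at r)"
      using deriv_at[OF cd[OF rT(3)] rT(1,2)] deriv_at[OF flowd[OF a rT(3)] rT(1,2)]
      by (auto intro!: derivative_eq_intros)
    have rt: "r \<in> {0..t}" using r by auto
    have l: "\<bar>D 0 0 (c r) r - D 0 0 (\<gamma> a r) r\<bar> \<le> M * \<bar>c r - \<gamma> a r\<bar>"
      by (rule lip_gen[OF rT(3)]) (use M rt flowX[OF a rT(3)] cX[OF rT(3)] in auto)
    define p where "p = c r - \<gamma> a r"
    define q where "q = D 0 0 (c r) r - D 0 0 (\<gamma> a r) r"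
    have lq: "\<bar>q\<bar> \<le> M * \<bar>p\<bar>" using l by (simp add: p_def q_def)
    have "p * q \<le> \<bar>p\<bar> * \<bar>q\<bar>" by (rule mult_le_abs)
    also have "\<dots> \<le> \<bar>p\<bar> * (M * \<bar>p\<bar>)" by (rule mult_left_mono[OF lq]) simp
    also have "\<dots> = M * p\<^sup>2" by (simp add: power2_eq_square abs_mult_self_eq algebra_simps)
    finally have "p * q \<le> M * p\<^sup>2" .
    hence "2 * p * q \<le> 2 * M * p\<^sup>2 + 0" by (simp add: mult.assoc)
    thus "2 * (c r - \<gamma> a r) * (D 0 0 (c r) r - D 0 0 (\<gamma> a r) r)
        \<le> 2 * M * (c r - \<gamma> a r)\<^sup>2 + 0" by (simp add: p_def q_def)
  qed (use t M0 in auto)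
  hence "(c t - \<gamma> a t)\<^sup>2 \<le> 0" using c0 flow0[OF a] by simp
  thus ?thesis by simp
qed

definition v where "v a s = 1 / w a s"
definition V' where "V' a s = - U1 a s * v a s"
definition I where "I s = integral {0..1} (\<lambda>y. (D 1 0 y s)\<^sup>2)"

lemma v_pos: "v a s > 0" by (simp add: v_def w_pos)
lemma v0: "v a 0 = 1" by (simp add: v_def w0)

lemma v_deriv:
  assumes a: "a \<in> {0..1}" and s: "s \<in> {0..<T}"
  shows "(v a has_real_derivative V' a s) (at s within {0..<T})"
  using w_deriv[OF a s] w_pos[of a s] unfolding v_def[abs_def] V'_def
  by (auto intro!: derivative_eq_intros simp: power2_eq_square field_simps)

lemma v_cont: "a \<in> {0..1} \<Longrightarrow> continuous_on {0..<T} (v a)"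
  using v_deriv DERIV_continuous continuous_on_eq_continuous_within by blast

lemma V'_cont: "a \<in> {0..1} \<Longrightarrow> continuous_on {0..<T} (V' a)"
  unfolding V'_def[abs_def] by (intro continuous_intros U1_cont v_cont)

lemma U1_deriv:
  assumes a: "a \<in> {0..1}" and s: "0 < s" "s < T"
  shows "(U1 a has_real_derivative (U1 a s)\<^sup>2 - 2 * I s) (at s within {0..<T})"
proof -
  have sT: "s \<in> {0..<T}" using s by auto
  have "D 1 1 (\<gamma> a s) s + D 0 0 (\<gamma> a s) s * D 2 0 (\<gamma> a s) s - (D 1 0 (\<gamma> a s) s)\<^sup>2 = - 2 * I s"
    using pdeX[OF flowX[OF a sT]] s by (simp add: I_def)
  hence e: "D (Suc 1) 0 (\<gamma> a s) s * D 0 0 (\<gamma> a s) s + D 1 (Suc 0) (\<gamma> a s) s = (U1 a s)\<^sup>2 - 2 * I s"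
    by (simp add: U1_def algebra_simps numeral_2_eq_2)
  show ?thesis using DERIV_cong[OF tderiv_traj[OF a sT, of 1 0] e] unfolding U1_def[abs_def] by simp
qed

lemma V'_deriv:
  assumes a: "a \<in> {0..1}" and s: "0 < s" "s < T"
  shows "(V' a has_real_derivative 2 * I s * v a s) (at s within {0..<T})"
proof -
  have sT: "s \<in> {0..<T}" using s by auto
  show ?thesis
    unfolding V'_def[abs_def]
    using U1_deriv[OF a s] v_deriv[OF a sT]
    by (auto intro!: derivative_eq_intros simp: V'_def power2_eq_square algebra_simps)
qed

lemma D10_cont01: assumes s: "s \<in> {0..<T}" shows "continuous_on {0..1} (\<lambda>y. D 1 0 y s)"
proof -
  have "continuous_on X (\<lambda>y. D 1 0 y s)"
    using xderiv[OF _ s, of _ 1 0] DERIV_continuous continuous_on_eq_continuous_within by blast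
  thus ?thesis using continuous_on_subset unitX by blast
qed

lemma I_bound:
  assumes s: "s \<in> {0..<T}" and M: "\<And>x. x \<in> X \<Longrightarrow> \<bar>D 1 0 x s\<bar> \<le> M"
  shows "0 \<le> I s" "I s \<le> M\<^sup>2"
proof -
  have int: "(\<lambda>y. (D 1 0 y s)\<^sup>2) integrable_on {0..1}"
    by (intro integrable_continuous_real continuous_intros D10_cont01[OF s])
  show "0 \<le> I s" unfolding I_def by (rule integral_nonneg[OF int]) simp
  have "I s \<le> integral {0..1} (\<lambda>y::real. M\<^sup>2)" unfolding I_def
  proof (rule Henstock_Kurzweil_Integration.integral_le[OF int])
    fix y :: real assume "y \<in> {0..1}"
    hence "\<bar>D 1 0 y s\<bar> \<le> M" using M unitX by auto
    hence "\<bar>D 1 0 y s\<bar>\<^sup>2 \<le> M\<^sup>2" by (intro power_mono) auto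
    thus "(D 1 0 y s)\<^sup>2 \<le> M\<^sup>2" by simp
  qed (rule integrable_const_ivl)
  thus "I s \<le> M\<^sup>2" by simp
qed

end


locale lag2 = lag +
  assumes ends: "\<And>s. s \<in> {0..<T} \<Longrightarrow> \<gamma> 1 s - \<gamma> 0 s = 1"
    and u0ends: "D 0 0 0 0 = D 0 0 1 0"
    and T0: "0 < T"
begin

lemma interior01: "{0<..<1} \<subseteq> interior X"
proof -
  have "interior {0..1::real} \<subseteq> interior X" using unitX by (rule interior_mono)
  thus ?thesis by simp
qed

lemma u_deriv01:
  assumes "x \<in> {0..1}"
  shows "((\<lambda>z. D i 0 z 0) has_real_derivative D (Suc i) 0 x 0) (at x within {0..1})"
  using has_field_derivative_subset[OF xderiv[of x 0 i 0] unitX] assms unitX T0 by auto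

lemma exists_b0: "\<exists>b. 0 < b \<and> b < 1 \<and> D 1 0 b 0 = 0"
proof -
  have c: "continuous_on {0..1} (\<lambda>z. D 0 0 z 0)"
    using u_deriv01 DERIV_continuous continuous_on_eq_continuous_within by blast
  have d: "((\<lambda>z. D 0 0 z 0) has_real_derivative D 1 0 x 0) (at x)" if "0 < x" "x < 1" for x
  proof -
    have "x \<in> interior X" using interior01 that by auto
    hence "at x within X = at x" by (rule at_within_interior)
    moreover have "x \<in> X" using unitX that by auto
    ultimately show ?thesis using xderiv[of x 0 0 0] T0 by auto
  qed
  have "\<exists>z. 0 < z \<and> z < 1 \<and> ((\<lambda>z. D 0 0 z 0) has_real_derivative 0) (at z)"
  proof (rule Rolle[of 0 1 "\<lambda>z. D 0 0 z 0"])
    show "(0::real) < 1" by simp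
    show "D 0 0 0 0 = D 0 0 1 0" by (rule u0ends)
    show "continuous_on {0..1} (\<lambda>z. D 0 0 z 0)" by (rule c)
    fix x :: real assume "0 < x" "x < 1"
    thus "(\<lambda>z. D 0 0 z 0) differentiable (at x)" using d real_differentiable_def by blast
  qed
  then obtain z where z: "0 < z" "z < 1" "((\<lambda>z. D 0 0 z 0) has_real_derivative 0) (at z)" by blast
  have "D 1 0 z 0 = 0" using DERIV_unique[OF d[OF z(1,2)] z(3)] .
  thus ?thesis using z by blast
qed

definition "b0 = (SOME b. 0 < b \<and> b < 1 \<and> D 1 0 b 0 = 0)"
definition "nd = (\<exists>a\<in>{0..1}. D 1 0 a 0 \<noteq> 0)"
definition "a2 = (SOME a. a \<in> {0..1} \<and> D 1 0 a 0 \<noteq> 0)"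
definition "c2 = D 1 0 a2 0"
definition "\<phi>1 s = v b0 s"
definition "\<phi>1' s = V' b0 s"
definition "k2 = (if nd then 1 / c2 else 0)"
definition "\<phi>2 s = (v b0 s - v a2 s) * k2"
definition "\<phi>2' s = (V' b0 s - V' a2 s) * k2"

lemma b0: "b0 \<in> {0..1}" "D 1 0 b0 0 = 0"
  using someI_ex[OF exists_b0] unfolding b0_def by auto

lemma a2: assumes "nd" shows "a2 \<in> {0..1}" "c2 \<noteq> 0"
proof -
  have "\<exists>a. a \<in> {0..1} \<and> D 1 0 a 0 \<noteq> 0" using assms unfolding nd_def by blast
  from someI_ex[OF this] show "a2 \<in> {0..1}" "c2 \<noteq> 0" unfolding a2_def c2_def by auto
qed

lemma not_nd: "\<not> nd \<Longrightarrow> a \<in> {0..1} \<Longrightarrow> D 1 0 a 0 = 0"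
  unfolding nd_def by auto

lemma V'0: "a \<in> {0..1} \<Longrightarrow> V' a 0 = - D 1 0 a 0"
  by (simp add: V'_def U1_def v0 flow0)

lemma phi_init: "\<phi>1 0 = 1" "\<phi>1' 0 = 0" "\<phi>2 0 = 0" "\<phi>2' 0 = (if nd then 1 else 0)"
proof -
  show "\<phi>1 0 = 1" "\<phi>1' 0 = 0" "\<phi>2 0 = 0" using b0 by (auto simp: \<phi>1_def \<phi>1'_def \<phi>2_def v0 V'0)
  show "\<phi>2' 0 = (if nd then 1 else 0)"
  proof (cases nd)
    case True
    thus ?thesis using b0 a2[OF True] by (simp add: \<phi>2'_def V'0 k2_def c2_def)
  qed (simp add: \<phi>2'_def k2_def)
qed

lemma phi_deriv:
  assumes s: "s \<in> {0..<T}"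
  shows "(\<phi>1 has_real_derivative \<phi>1' s) (at s within {0..<T})"
    "(\<phi>2 has_real_derivative \<phi>2' s) (at s within {0..<T})"
proof -
  show "(\<phi>1 has_real_derivative \<phi>1' s) (at s within {0..<T})"
    unfolding \<phi>1_def[abs_def] \<phi>1'_def using v_deriv[OF b0(1) s] .
  show "(\<phi>2 has_real_derivative \<phi>2' s) (at s within {0..<T})"
  proof (cases nd)
    case True
    thus ?thesis unfolding \<phi>2_def[abs_def] \<phi>2'_def using v_deriv[OF b0(1) s] v_deriv[OF a2(1)[OF True] s]
      by (auto intro!: derivative_eq_intros)
  qed (simp add: \<phi>2_def[abs_def] \<phi>2'_def k2_def)
qed

lemma phi'_deriv:
  assumes s: "0 < s" "s < T"
  shows "(\<phi>1' has_real_derivative 2 * I s * \<phi>1 s) (at s within {0..<T})"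
    "(\<phi>2' has_real_derivative 2 * I s * \<phi>2 s) (at s within {0..<T})"
proof -
  show "(\<phi>1' has_real_derivative 2 * I s * \<phi>1 s) (at s within {0..<T})"
    unfolding \<phi>1'_def[abs_def] \<phi>1_def using V'_deriv[OF b0(1) s] .
  show "(\<phi>2' has_real_derivative 2 * I s * \<phi>2 s) (at s within {0..<T})"
  proof (cases nd)
    case True
    thus ?thesis unfolding \<phi>2'_def[abs_def] \<phi>2_def using V'_deriv[OF b0(1) s] V'_deriv[OF a2(1)[OF True] s]
      by (auto intro!: derivative_eq_intros simp: algebra_simps)
  qed (simp add: \<phi>2_def \<phi>2'_def[abs_def] k2_def)
qed

lemma cont_of_deriv:
  assumes "\<And>s. s \<in> {0..<T} \<Longrightarrow> (f has_real_derivative f' s) (at s within {0..<T})"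
  shows "continuous_on {0..<T} f"
  using assms DERIV_continuous continuous_on_eq_continuous_within by blast

lemma phi_cont: "continuous_on {0..<T} \<phi>1" "continuous_on {0..<T} \<phi>2"
  "continuous_on {0..<T} \<phi>1'" "continuous_on {0..<T} \<phi>2'"
proof -
  show "continuous_on {0..<T} \<phi>1" "continuous_on {0..<T} \<phi>2"
    using cont_of_deriv phi_deriv by blast+
  show "continuous_on {0..<T} \<phi>1'" unfolding \<phi>1'_def[abs_def] using V'_cont[OF b0(1)] .
  show "continuous_on {0..<T} \<phi>2'"
  proof (cases nd)
    case True
    thus ?thesis unfolding \<phi>2'_def[abs_def] using V'_cont[OF b0(1)] V'_cont[OF a2(1)[OF True]]
      by (auto intro!: continuous_intros)
  qed (simp add: \<phi>2'_def[abs_def] k2_def)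
qed

lemma v_repr:
  assumes a: "a \<in> {0..1}" and s: "s \<in> {0..<T}"
  shows "v a s = \<phi>1 s - \<phi>2 s * D 1 0 a 0"
proof -
  obtain M where M: "\<And>x r. x \<in> X \<Longrightarrow> r \<in> {0..s} \<Longrightarrow> \<bar>D 1 0 x r\<bar> \<le> M \<and> \<bar>D 2 0 x r\<bar> \<le> M"
    using bnd[of s] s by fastforce
  define u where "u = D 1 0 a 0"
  have "(\<lambda>r. v a r - \<phi>1 r + \<phi>2 r * u) s = 0"
  proof (rule ode2_unique[where g="\<lambda>r. v a r - \<phi>1 r + \<phi>2 r * u" and s=s and G="\<lambda>r. V' a r - \<phi>1' r + \<phi>2' r * u" and q="\<lambda>r. 2 * I r" and Q="2 * M\<^sup>2"])
    show "0 \<le> s" using s by simp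
    have sub: "{0..s} \<subseteq> {0..<T}" using s by auto
    show "continuous_on {0..s} (\<lambda>r. v a r - \<phi>1 r + \<phi>2 r * u)"
      by (intro continuous_intros continuous_on_subset[OF v_cont[OF a] sub]
          continuous_on_subset[OF phi_cont(1) sub] continuous_on_subset[OF phi_cont(2) sub])
    show "continuous_on {0..s} (\<lambda>r. V' a r - \<phi>1' r + \<phi>2' r * u)"
      by (intro continuous_intros continuous_on_subset[OF V'_cont[OF a] sub]
          continuous_on_subset[OF phi_cont(3) sub] continuous_on_subset[OF phi_cont(4) sub])
    fix r assume r: "0 < r" "r < s"
    hence rT: "0 < r" "r < T" "r \<in> {0..<T}" using s by auto
    show "((\<lambda>r. v a r - \<phi>1 r + \<phi>2 r * u) has_real_derivative V' a r - \<phi>1' r + \<phi>2' r * u) (at r)"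
      using deriv_at[OF v_deriv[OF a rT(3)] rT(1,2)] deriv_at[OF phi_deriv(1)[OF rT(3)] rT(1,2)]
        deriv_at[OF phi_deriv(2)[OF rT(3)] rT(1,2)]
      by (auto intro!: derivative_eq_intros)
    show "((\<lambda>r. V' a r - \<phi>1' r + \<phi>2' r * u) has_real_derivative
        2 * I r * (v a r - \<phi>1 r + \<phi>2 r * u)) (at r)"
      using deriv_at[OF V'_deriv[OF a rT(1,2)] rT(1,2)] deriv_at[OF phi'_deriv(1)[OF rT(1,2)] rT(1,2)]
        deriv_at[OF phi'_deriv(2)[OF rT(1,2)] rT(1,2)]
      by (auto intro!: derivative_eq_intros simp: algebra_simps)
    have "0 \<le> I r" "I r \<le> M\<^sup>2" using I_bound[OF rT(3), of M] M r by auto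
    thus "\<bar>2 * I r\<bar> \<le> 2 * M\<^sup>2" by simp
  next
    show "v a 0 - \<phi>1 0 + \<phi>2 0 * u = 0" using phi_init by (simp add: v0)
    show "V' a 0 - \<phi>1' 0 + \<phi>2' 0 * u = 0"
      using phi_init not_nd[OF _ a] by (auto simp: V'0[OF a] u_def)
  qed
  thus ?thesis by (simp add: u_def)
qed


lemma V'_repr:
  assumes a: "a \<in> {0..1}" and s: "s \<in> {0..<T}"
  shows "V' a s = \<phi>1' s - \<phi>2' s * D 1 0 a 0"
proof -
  have "((\<lambda>r. \<phi>1 r - \<phi>2 r * D 1 0 a 0) has_real_derivative \<phi>1' s - \<phi>2' s * D 1 0 a 0) (at s within {0..<T})"
    using phi_deriv[OF s] by (auto intro!: derivative_eq_intros)
  hence "(v a has_real_derivative \<phi>1' s - \<phi>2' s * D 1 0 a 0) (at s within {0..<T})"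
    by (rule has_field_derivative_transform_within[OF _ zero_less_one s]) (use v_repr[OF a] in auto)
  thus ?thesis using has_field_derivative_unique[OF v_deriv[OF a s]] nontriv_Ico[OF s] by blast
qed


lemma W1:
  assumes "nd" and s: "s \<in> {0..<T}"
  shows "\<phi>2' s * \<phi>1 s - \<phi>2 s * \<phi>1' s = 1"
proof -
  define Wf where "Wf r = \<phi>2' r * \<phi>1 r - \<phi>2 r * \<phi>1' r" for r
  have sub: "{0..s} \<subseteq> {0..<T}" using s by auto
  have c: "continuous_on {0..s} Wf" unfolding Wf_def
    by (intro continuous_intros continuous_on_subset[OF phi_cont(1) sub]
          continuous_on_subset[OF phi_cont(2) sub] continuous_on_subset[OF phi_cont(3) sub]
          continuous_on_subset[OF phi_cont(4) sub])
  have d: "(Wf has_real_derivative 0) (at r)" if r: "0 < r" "r < s" for r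
  proof -
    have rT: "0 < r" "r < T" "r \<in> {0..<T}" using s r by auto
    note e1 = deriv_at[OF phi_deriv(1)[OF rT(3)] rT(1,2)] and e2 = deriv_at[OF phi_deriv(2)[OF rT(3)] rT(1,2)]
      and e3 = deriv_at[OF phi'_deriv(1)[OF rT(1,2)] rT(1,2)] and e4 = deriv_at[OF phi'_deriv(2)[OF rT(1,2)] rT(1,2)]
    have "(Wf has_real_derivative
        (2 * I r * \<phi>2 r * \<phi>1 r + \<phi>1' r * \<phi>2' r - (\<phi>2' r * \<phi>1' r + (2 * I r * \<phi>1 r) * \<phi>2 r))) (at r)"
      unfolding Wf_def[abs_def]
      by (rule DERIV_diff[OF DERIV_mult[OF e4 e1] DERIV_mult[OF e2 e3]])
    moreover have "2 * I r * \<phi>2 r * \<phi>1 r + \<phi>1' r * \<phi>2' r - (\<phi>2' r * \<phi>1' r + (2 * I r * \<phi>1 r) * \<phi>2 r) = 0"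
      by (simp add: algebra_simps)
    ultimately show ?thesis by simp
  qed
  have "Wf 0 \<le> Wf s"
  proof (rule DERIV_nonneg_imp_increasing_open[where f=Wf])
    show "0 \<le> s" using s by simp
    fix x assume "0 < x" "x < s"
    thus "\<exists>y. (Wf has_real_derivative y) (at x) \<and> 0 \<le> y" using d by blast
  qed (rule c)
  moreover have "Wf s \<le> Wf 0"
  proof (rule DERIV_nonpos_imp_decreasing_open[where f=Wf])
    show "0 \<le> s" using s by simp
    fix x assume "0 < x" "x < s"
    thus "\<exists>y. (Wf has_real_derivative y) (at x) \<and> y \<le> 0" using d by blast
  qed (rule c)
  moreover have "Wf 0 = 1" using phi_init \<open>nd\<close> by (simp add: Wf_def)
  ultimately show ?thesis by (simp add: Wf_def)
qed

lemma int_w: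
  assumes t: "t \<in> {0..<T}"
  shows "((\<lambda>a. w a t) has_integral 1) {0..1}"
proof -
  have "((\<lambda>a. w a t) has_integral (\<gamma> 1 t - \<gamma> 0 t)) {0..1}"
  proof (rule fundamental_theorem_of_calculus)
    fix x :: real assume "x \<in> {0..1}"
    thus "((\<lambda>b. \<gamma> b t) has_vector_derivative w x t) (at x within {0..1})"
      using gamma_deriv[of x t] t by (simp add: has_real_derivative_iff_has_vector_derivative)
  qed simp
  thus ?thesis using ends[OF t] by simp
qed

end


context lag2 begin

lemma u2_zero: assumes "\<not> nd" "a \<in> {0..1}" shows "D 2 0 a 0 = 0"
proof -
  have "((\<lambda>z. D 1 0 z 0) has_real_derivative D 2 0 a 0) (at a within {0..1})"
    using u_deriv01[OF assms(2), of 1] by (simp add: numeral_2_eq_2)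
  moreover have "((\<lambda>z. D 1 0 z 0) has_real_derivative 0) (at a within {0..1})"
    by (rule has_field_derivative_transform_within[OF DERIV_const zero_less_one assms(2)])
      (use not_nd[OF assms(1)] in auto)
  ultimately show ?thesis using has_field_derivative_unique nontriv_Icc[of 0 1 a] assms(2) by auto
qed

lemma uW: assumes "a \<in> {0..1}" "t \<in> {0..<T}"
  shows "D 2 0 a 0 * (\<phi>2' t * \<phi>1 t - \<phi>2 t * \<phi>1' t) = D 2 0 a 0"
  using W1[OF _ assms(2)] u2_zero[OF _ assms(1)] by (cases nd) auto

lemma D20_rel:
  assumes a: "a \<in> {0..1}" and t: "t \<in> {0..<T}"
  shows "D 2 0 (\<gamma> a t) t = D 2 0 a 0 / v a t"
proof -
  have tt: "0 \<le> t" "t < T" using t by auto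
  have X01: "\<And>r. r \<in> {0..1} \<Longrightarrow> \<gamma> r t \<in> X" using flowX t by auto
  have d1: "((\<lambda>\<beta>. U1 \<beta> t) has_real_derivative D 2 0 (\<gamma> a t) t * w a t) (at a within {0..1})"
    using xderiv_comp[OF X01 t a gamma_deriv[OF a tt], of 1 0] unfolding U1_def
    by (simp add: numeral_2_eq_2)
  define A where "A = \<phi>1' t"
  define B where "B = \<phi>2' t"
  define C where "C = \<phi>1 t"
  define E where "E = \<phi>2 t"
  have vr: "\<And>\<beta>. \<beta> \<in> {0..1} \<Longrightarrow> v \<beta> t = C - E * D 1 0 \<beta> 0"
    using v_repr t by (simp add: C_def E_def)
  have U1r: "U1 \<beta> t = - (A - B * D 1 0 \<beta> 0) / (C - E * D 1 0 \<beta> 0)" if "\<beta> \<in> {0..1}" for \<beta>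
  proof -
    have "V' \<beta> t = - U1 \<beta> t * v \<beta> t" by (simp add: V'_def)
    hence "U1 \<beta> t = - V' \<beta> t / v \<beta> t" using v_pos[of \<beta> t] by (simp add: field_simps)
    thus ?thesis using V'_repr[OF that t] vr[OF that] by (simp add: A_def B_def)
  qed
  have nz: "C - E * D 1 0 a 0 \<noteq> 0" using vr[OF a] v_pos[of a t] by simp
  define u where "u z = D 1 0 z 0" for z
  have ud: "(u has_real_derivative D 2 0 a 0) (at a within {0..1})"
    using u_deriv01[OF a, of 1] unfolding u_def[abs_def] by (simp add: numeral_2_eq_2)
  have "((\<lambda>\<beta>. - (A - B * u \<beta>) / (C - E * u \<beta>)) has_real_derivative
     D 2 0 a 0 * (B * C - E * A) / (C - E * u a)\<^sup>2) (at a within {0..1})"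
    using nz unfolding u_def[symmetric] by (auto intro!: derivative_eq_intros ud simp: field_simps power2_eq_square)
  hence d2: "((\<lambda>\<beta>. U1 \<beta> t) has_real_derivative
     D 2 0 a 0 * (B * C - E * A) / (C - E * u a)\<^sup>2) (at a within {0..1})"
    by (rule has_field_derivative_transform_within[OF _ zero_less_one a]) (use U1r in \<open>auto simp: u_def\<close>)
  have eq: "D 2 0 (\<gamma> a t) t * w a t = D 2 0 a 0 * (B * C - E * A) / (C - E * u a)\<^sup>2"
    using has_field_derivative_unique[OF d1 d2] nontriv_Icc[of 0 1 a] a by auto
  have "D 2 0 a 0 * (B * C - E * A) = D 2 0 a 0" using uW[OF a t] by (simp add: A_def B_def C_def E_def)
  moreover have "C - E * u a = v a t" using vr[OF a] by (simp add: u_def)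
  moreover have "w a t = 1 / v a t" by (simp add: v_def)
  ultimately have "D 2 0 (\<gamma> a t) t * (1 / v a t) = D 2 0 a 0 / (v a t)\<^sup>2"
    using eq by simp
  thus ?thesis using v_pos[of a t] by (simp add: field_simps power2_eq_square)
qed

lemma D30_rel:
  assumes a: "a \<in> {0..1}" and t: "t \<in> {0..<T}"
  shows "D 3 0 (\<gamma> a t) t = D 3 0 a 0 + \<phi>2 t * (D 2 0 a 0)\<^sup>2 / v a t"
proof -
  have tt: "0 \<le> t" "t < T" using t by auto
  have X01: "\<And>r. r \<in> {0..1} \<Longrightarrow> \<gamma> r t \<in> X" using flowX t by auto
  have d1: "((\<lambda>\<beta>. D 2 0 (\<gamma> \<beta> t) t) has_real_derivative D 3 0 (\<gamma> a t) t * w a t) (at a within {0..1})"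
    using xderiv_comp[OF X01 t a gamma_deriv[OF a tt], of 2 0] by (simp add: numeral_3_eq_3 numeral_2_eq_2)
  define C where "C = \<phi>1 t"
  define E where "E = \<phi>2 t"
  have vr: "\<And>\<beta>. \<beta> \<in> {0..1} \<Longrightarrow> v \<beta> t = C - E * D 1 0 \<beta> 0"
    using v_repr t by (simp add: C_def E_def)
  have nz: "C - E * D 1 0 a 0 \<noteq> 0" using vr[OF a] v_pos[of a t] by simp
  define u where "u z = D 1 0 z 0" for z
  have ud: "(u has_real_derivative D 2 0 a 0) (at a within {0..1})"
    using u_deriv01[OF a, of 1] unfolding u_def[abs_def] by (simp add: numeral_2_eq_2)
  have ud2: "((\<lambda>z. D 2 0 z 0) has_real_derivative D 3 0 a 0) (at a within {0..1})"
    using u_deriv01[OF a, of 2] by (simp add: numeral_3_eq_3 numeral_2_eq_2)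
  have "((\<lambda>\<beta>. D 2 0 \<beta> 0 / (C - E * u \<beta>)) has_real_derivative
     (D 3 0 a 0 * (C - E * u a) + E * (D 2 0 a 0)\<^sup>2) / (C - E * u a)\<^sup>2) (at a within {0..1})"
    using nz unfolding u_def[symmetric] by (auto intro!: derivative_eq_intros ud ud2 simp: field_simps power2_eq_square)
  hence d2: "((\<lambda>\<beta>. D 2 0 (\<gamma> \<beta> t) t) has_real_derivative
     (D 3 0 a 0 * (C - E * u a) + E * (D 2 0 a 0)\<^sup>2) / (C - E * u a)\<^sup>2) (at a within {0..1})"
    unfolding u_def by (rule has_field_derivative_transform_within[OF _ zero_less_one a]) (use D20_rel t vr in auto)
  have eq: "D 3 0 (\<gamma> a t) t * w a t = (D 3 0 a 0 * (C - E * u a) + E * (D 2 0 a 0)\<^sup>2) / (C - E * u a)\<^sup>2"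
    using has_field_derivative_unique[OF d1 d2] nontriv_Icc[of 0 1 a] a by auto
  moreover have "C - E * u a = v a t" using vr[OF a] by (simp add: u_def)
  moreover have "w a t = 1 / v a t" by (simp add: v_def)
  ultimately have "D 3 0 (\<gamma> a t) t * (1 / v a t) = (D 3 0 a 0 * v a t + E * (D 2 0 a 0)\<^sup>2) / (v a t)\<^sup>2"
    by simp
  thus ?thesis using v_pos[of a t] by (simp add: field_simps power2_eq_square E_def)
qed

end


lemma K_props:
  fixes ue :: "real \<Rightarrow> real"
  assumes cu: "continuous_on {0..1} ue" and iu: "(ue has_integral 0) {0..1}"
    and c: "0 < c" and J: "\<And>\<beta>. \<beta> \<in> {0..1} \<Longrightarrow> c \<le> 1 - e * ue \<beta>"
  shows "(\<lambda>\<beta>. 1 / (1 - e * ue \<beta>)) integrable_on {0..1}"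
    "continuous_on {0..1} (\<lambda>\<beta>. 1 / (1 - e * ue \<beta>))"
    "1 \<le> integral {0..1} (\<lambda>\<beta>. 1 / (1 - e * ue \<beta>))"
    "integral {0..1} (\<lambda>\<beta>. 1 / (1 - e * ue \<beta>)) \<le> 1 / c"
proof -
  show cf: "continuous_on {0..1} (\<lambda>\<beta>. 1 / (1 - e * ue \<beta>))"
    by (intro continuous_intros cu) (use J c in force)
  show int: "(\<lambda>\<beta>. 1 / (1 - e * ue \<beta>)) integrable_on {0..1}"
    by (rule integrable_continuous_real[OF cf])
  have "((\<lambda>\<beta>. 1 + e * ue \<beta>) has_integral 1 + e * 0) {0..1}"
    by (intro has_integral_add has_integral_mult_right iu) (simp add: has_integral_const_real[of "1::real" 0 1, simplified])
  hence i1: "integral {0..1} (\<lambda>\<beta>. 1 + e * ue \<beta>) = 1" "(\<lambda>\<beta>. 1 + e * ue \<beta>) integrable_on {0..1}"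
    by (auto simp: has_integral_iff)
  have "integral {0..1} (\<lambda>\<beta>. 1 + e * ue \<beta>) \<le> integral {0..1} (\<lambda>\<beta>. 1 / (1 - e * ue \<beta>))"
  proof (rule Henstock_Kurzweil_Integration.integral_le[OF i1(2) int])
    fix \<beta> :: real assume b: "\<beta> \<in> {0..1}"
    have p: "0 < 1 - e * ue \<beta>" using J[OF b] c by linarith
    have "(1 + e * ue \<beta>) * (1 - e * ue \<beta>) = 1 - (e * ue \<beta>)\<^sup>2" by (simp add: power2_eq_square algebra_simps)
    hence "(1 + e * ue \<beta>) * (1 - e * ue \<beta>) \<le> 1" using zero_le_power2[of "e * ue \<beta>"] by linarith
    thus "1 + e * ue \<beta> \<le> 1 / (1 - e * ue \<beta>)" using p by (simp add: field_simps)
  qed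
  thus "1 \<le> integral {0..1} (\<lambda>\<beta>. 1 / (1 - e * ue \<beta>))" using i1 by simp
  have "integral {0..1} (\<lambda>\<beta>. 1 / (1 - e * ue \<beta>)) \<le> integral {0..1} (\<lambda>\<beta>::real. 1 / c)"
  proof (rule Henstock_Kurzweil_Integration.integral_le[OF int])
    fix \<beta> :: real assume b: "\<beta> \<in> {0..1}"
    show "1 / (1 - e * ue \<beta>) \<le> 1 / c" using J[OF b] c by (intro divide_left_mono) auto
  qed (rule integrable_const_ivl)
  thus "integral {0..1} (\<lambda>\<beta>. 1 / (1 - e * ue \<beta>)) \<le> 1 / c" by simp
qed

lemma K_lip:
  fixes ue :: "real \<Rightarrow> real"
  assumes cu: "continuous_on {0..1} ue" and iu: "(ue has_integral 0) {0..1}"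
    and M: "\<And>\<beta>. \<beta> \<in> {0..1} \<Longrightarrow> \<bar>ue \<beta>\<bar> \<le> M"
    and c: "0 < c" and J1: "\<And>\<beta>. \<beta> \<in> {0..1} \<Longrightarrow> c \<le> 1 - e1 * ue \<beta>"
    and J2: "\<And>\<beta>. \<beta> \<in> {0..1} \<Longrightarrow> c \<le> 1 - e2 * ue \<beta>"
  shows "\<bar>1 / (integral {0..1} (\<lambda>\<beta>. 1 / (1 - e1 * ue \<beta>)))\<^sup>2 - 1 / (integral {0..1} (\<lambda>\<beta>. 1 / (1 - e2 * ue \<beta>)))\<^sup>2\<bar>
     \<le> (2 * M / c ^ 3) * \<bar>e1 - e2\<bar>"
proof -
  define K1 where "K1 = integral {0..1} (\<lambda>\<beta>. 1 / (1 - e1 * ue \<beta>))"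
  define K2 where "K2 = integral {0..1} (\<lambda>\<beta>. 1 / (1 - e2 * ue \<beta>))"
  note P1 = K_props[OF cu iu c J1] and P2 = K_props[OF cu iu c J2]
  have K1: "1 \<le> K1" "K1 \<le> 1 / c" using P1 by (auto simp: K1_def)
  have K2: "1 \<le> K2" "K2 \<le> 1 / c" using P2 by (auto simp: K2_def)
  have M0: "0 \<le> M" using M[of 0] by auto
  have "K1 - K2 = integral {0..1} (\<lambda>\<beta>. 1 / (1 - e1 * ue \<beta>) - 1 / (1 - e2 * ue \<beta>))"
    unfolding K1_def K2_def by (rule integral_diff[symmetric]) (use P1 P2 in auto)
  hence "\<bar>K1 - K2\<bar> \<le> (M * \<bar>e1 - e2\<bar> / c\<^sup>2) * (1 - 0)"
    using integral_bound[of 0 1 "\<lambda>\<beta>. 1 / (1 - e1 * ue \<beta>) - 1 / (1 - e2 * ue \<beta>)" "M * \<bar>e1 - e2\<bar> / c\<^sup>2"]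
  proof -
    assume eq: "K1 - K2 = integral {0..1} (\<lambda>\<beta>. 1 / (1 - e1 * ue \<beta>) - 1 / (1 - e2 * ue \<beta>))"
    have "norm (integral {0..1} (\<lambda>\<beta>. 1 / (1 - e1 * ue \<beta>) - 1 / (1 - e2 * ue \<beta>))) \<le> (M * \<bar>e1 - e2\<bar> / c\<^sup>2) * (1 - 0)"
    proof (rule integral_bound)
      show "continuous_on {0..1} (\<lambda>\<beta>. 1 / (1 - e1 * ue \<beta>) - 1 / (1 - e2 * ue \<beta>))"
        by (rule continuous_on_diff[OF P1(2) P2(2)])
      fix \<beta> :: real assume b: "\<beta> \<in> {0..1}"
      have p1: "c \<le> 1 - e1 * ue \<beta>" and p2: "c \<le> 1 - e2 * ue \<beta>" using J1[OF b] J2[OF b] .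
      have pp: "c\<^sup>2 \<le> (1 - e1 * ue \<beta>) * (1 - e2 * ue \<beta>)"
        using mult_mono[OF p1 p2] c p1 by (simp add: power2_eq_square)
      have "1 / (1 - e1 * ue \<beta>) - 1 / (1 - e2 * ue \<beta>) = (e1 - e2) * ue \<beta> / ((1 - e1 * ue \<beta>) * (1 - e2 * ue \<beta>))"
        using p1 p2 c by (simp add: field_simps)
      hence "norm (1 / (1 - e1 * ue \<beta>) - 1 / (1 - e2 * ue \<beta>)) = \<bar>e1 - e2\<bar> * \<bar>ue \<beta>\<bar> / ((1 - e1 * ue \<beta>) * (1 - e2 * ue \<beta>))"
        using p1 p2 c by (simp add: abs_mult abs_divide)
      also have "\<dots> \<le> \<bar>e1 - e2\<bar> * M / c\<^sup>2"
        by (rule frac_le) (use M[OF b] pp c in \<open>auto intro: mult_left_mono\<close>)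
      finally show "norm (1 / (1 - e1 * ue \<beta>) - 1 / (1 - e2 * ue \<beta>)) \<le> M * \<bar>e1 - e2\<bar> / c\<^sup>2"
        by (simp add: mult.commute)
    qed simp
    thus ?thesis using eq by simp
  qed
  hence dK: "\<bar>K1 - K2\<bar> \<le> M * \<bar>e1 - e2\<bar> / c\<^sup>2" by simp
  have "\<bar>1 / K1\<^sup>2 - 1 / K2\<^sup>2\<bar> = \<bar>K1 - K2\<bar> * (K1 + K2) / (K1\<^sup>2 * K2\<^sup>2)"
  proof -
    have e: "1 / K1\<^sup>2 - 1 / K2\<^sup>2 = (K2 - K1) * (K1 + K2) / (K1\<^sup>2 * K2\<^sup>2)"
      using K1 K2 by (simp add: field_simps power2_eq_square)
    have "\<bar>K1 + K2\<bar> = K1 + K2" "\<bar>K1\<^sup>2 * K2\<^sup>2\<bar> = K1\<^sup>2 * K2\<^sup>2" using K1 K2 by auto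
    thus ?thesis unfolding e abs_divide abs_mult by (simp add: abs_minus_commute)
  qed
  also have "\<dots> \<le> \<bar>K1 - K2\<bar> * (K1 + K2)"
  proof -
    have a: "1 \<le> K1\<^sup>2" by (rule one_le_power) (use K1 in auto)
    have b: "1 \<le> K2\<^sup>2" by (rule one_le_power) (use K2 in auto)
    have "1 * 1 \<le> K1\<^sup>2 * K2\<^sup>2" by (rule mult_mono[OF a b]) auto
    hence "\<bar>K1 - K2\<bar> * (K1 + K2) / (K1\<^sup>2 * K2\<^sup>2) \<le> \<bar>K1 - K2\<bar> * (K1 + K2) / 1"
      using K1 K2 by (intro divide_left_mono) auto
    thus ?thesis by simp
  qed
  also have "\<dots> \<le> (M * \<bar>e1 - e2\<bar> / c\<^sup>2) * (2 / c)"
    using K1 K2 dK by (intro mult_mono) auto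
  also have "\<dots> = (2 * M / c ^ 3) * \<bar>e1 - e2\<bar>" using c by (simp add: field_simps power2_eq_square power3_eq_cube)
  finally show ?thesis by (simp add: K1_def K2_def)
qed



context lag2 begin

definition "Kf e = integral {0..1} (\<lambda>\<beta>. 1 / (1 - e * D 1 0 \<beta> 0))"
definition "\<eta>t s = \<phi>2 s / \<phi>1 s"

lemma ue_cont: "continuous_on {0..1} (\<lambda>\<beta>. D 1 0 \<beta> 0)"
  using u_deriv01[of _ 1] DERIV_continuous continuous_on_eq_continuous_within by blast

lemma ue_int: "((\<lambda>\<beta>. D 1 0 \<beta> 0) has_integral 0) {0..1}"
proof -
  have "((\<lambda>\<beta>. D 1 0 \<beta> 0) has_integral (D 0 0 1 0 - D 0 0 0 0)) {0..1}"
  proof (rule fundamental_theorem_of_calculus)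
    fix x :: real assume "x \<in> {0..1}"
    thus "((\<lambda>z. D 0 0 z 0) has_vector_derivative D 1 0 x 0) (at x within {0..1})"
      using u_deriv01[of x 0] by (simp add: has_real_derivative_iff_has_vector_derivative)
  qed simp
  thus ?thesis using u0ends by simp
qed

lemma phi1_pos: "\<phi>1 s > 0" by (simp add: \<phi>1_def v_pos)

lemma wv: "w a s = 1 / v a s" by (simp add: v_def)

lemma int_invv: "t \<in> {0..<T} \<Longrightarrow> ((\<lambda>a. 1 / v a t) has_integral 1) {0..1}"
  using int_w by (simp add: v_def)

lemma v_bounds:
  assumes a: "a \<in> {0..1}" and s: "0 \<le> s" "s \<le> t" and t: "t < T"
    and M: "\<And>x r. x \<in> X \<Longrightarrow> r \<in> {0..t} \<Longrightarrow> \<bar>D 1 0 x r\<bar> \<le> M"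
  shows "exp (- M * t) \<le> v a s" "v a s \<le> exp (M * t)"
proof -
  have M0: "0 \<le> M" using M[of 0 0] unitX s by force
  have "\<bar>integral {0..s} (U1 a)\<bar> \<le> M * s"
    by (rule int_U1_bound[OF a s(1)]) (use s t M in auto)
  moreover have "M * s \<le> M * t" using M0 s by (intro mult_left_mono) auto
  ultimately have i: "\<bar>integral {0..s} (U1 a)\<bar> \<le> M * t" by linarith
  have vv: "v a s = exp (- integral {0..s} (U1 a))" by (simp add: v_def w_def exp_minus inverse_eq_divide)
  show "exp (- M * t) \<le> v a s" unfolding vv using i by simp
  show "v a s \<le> exp (M * t)" unfolding vv using i by simp
qed

lemma etat_props:
  assumes "nd" and s: "s \<in> {0..<T}"
  shows "Kf (\<eta>t s) = \<phi>1 s"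
    "\<And>\<beta>. \<beta> \<in> {0..1} \<Longrightarrow> 1 - \<eta>t s * D 1 0 \<beta> 0 = v \<beta> s / \<phi>1 s"
    "(\<eta>t has_real_derivative 1 / (\<phi>1 s)\<^sup>2) (at s within {0..<T})"
proof -
  show J: "1 - \<eta>t s * D 1 0 \<beta> 0 = v \<beta> s / \<phi>1 s" if "\<beta> \<in> {0..1}" for \<beta>
    using v_repr[OF that s] phi1_pos[of s] by (simp add: \<eta>t_def field_simps)
  have "Kf (\<eta>t s) = integral {0..1} (\<lambda>\<beta>. \<phi>1 s * (1 / v \<beta> s))"
    unfolding Kf_def by (rule integral_cong) (use J phi1_pos[of s] in auto)
  also have "\<dots> = \<phi>1 s * integral {0..1} (\<lambda>\<beta>. 1 / v \<beta> s)" by (rule integral_mult_right)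
  also have "\<dots> = \<phi>1 s" using int_invv[OF s] by (simp add: has_integral_iff)
  finally show "Kf (\<eta>t s) = \<phi>1 s" .
  have "(\<eta>t has_real_derivative (\<phi>2' s * \<phi>1 s - \<phi>2 s * \<phi>1' s) / (\<phi>1 s)\<^sup>2) (at s within {0..<T})"
    unfolding \<eta>t_def[abs_def] using phi_deriv[OF s] phi1_pos[of s]
    by (auto intro!: derivative_eq_intros simp: power2_eq_square field_simps)
  thus "(\<eta>t has_real_derivative 1 / (\<phi>1 s)\<^sup>2) (at s within {0..<T})" using W1[OF \<open>nd\<close> s] by simp
qed

lemma etat0: "\<eta>t 0 = 0" using phi_init by (simp add: \<eta>t_def)

lemma etat_cont: "continuous_on {0..<T} \<eta>t"
  unfolding \<eta>t_def[abs_def] using phi_cont(1,2) phi1_pos by (intro continuous_intros) (auto simp: less_imp_neq[symmetric])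

lemma eta_eq:
  assumes "nd" and \<eta>0: "\<eta> 0 = 0"
    and ode: "\<And>s. s \<in> {0..<T} \<Longrightarrow> (\<eta> has_real_derivative 1 / (Kf (\<eta> s))\<^sup>2) (at s within {0..<T})"
    and t: "t \<in> {0..<T}"
  shows "\<eta> t = \<eta>t t"
proof -
  have tt: "0 \<le> t" "t < T" using t by auto
  obtain M where M: "\<And>x r. x \<in> X \<Longrightarrow> r \<in> {0..t} \<Longrightarrow> \<bar>D 1 0 x r\<bar> \<le> M \<and> \<bar>D 2 0 x r\<bar> \<le> M"
    using bnd[OF tt] by blast
  have M0: "0 \<le> M" using M[of 0 0] unitX tt by force
  define c0 where "c0 = exp (- M * t) / exp (M * t)"
  have c0: "0 < c0" by (simp add: c0_def)
  have lowJ: "c0 \<le> 1 - \<eta>t s * D 1 0 \<beta> 0" if s: "s \<in> {0..t}" and b: "\<beta> \<in> {0..1}" for s \<beta>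
  proof -
    have sT: "s \<in> {0..<T}" using s tt by auto
    have "exp (- M * t) / exp (M * t) \<le> v \<beta> s / \<phi>1 s"
    proof (rule frac_le)
      show "0 \<le> v \<beta> s" using v_pos[of \<beta> s] by simp
      show "exp (- M * t) \<le> v \<beta> s" by (rule v_bounds(1)[OF b _ _ tt(2)]) (use s M in auto)
      show "0 < \<phi>1 s" by (rule phi1_pos)
      show "\<phi>1 s \<le> exp (M * t)" unfolding \<phi>1_def by (rule v_bounds(2)[OF b0(1) _ _ tt(2)]) (use s M in auto)
    qed
    thus ?thesis using etat_props(2)[OF \<open>nd\<close> sT b] by (simp add: c0_def)
  qed
  have Mu: "\<bar>D 1 0 \<beta> 0\<bar> \<le> M" if "\<beta> \<in> {0..1}" for \<beta> using M[of \<beta> 0] that unitX tt by auto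
  define \<delta> where "\<delta> = c0 / (2 * (M + 1))"
  have \<delta>: "0 < \<delta>" using c0 M0 by (simp add: \<delta>_def)
  have region: "c0 / 2 \<le> 1 - e * D 1 0 \<beta> 0" if s: "s \<in> {0..t}" and e: "\<bar>e - \<eta>t s\<bar> \<le> \<delta>" and b: "\<beta> \<in> {0..1}" for s e \<beta>
  proof -
    have "\<bar>(e - \<eta>t s) * D 1 0 \<beta> 0\<bar> \<le> \<delta> * M"
      unfolding abs_mult by (rule mult_mono[OF e Mu[OF b]]) (use \<delta> in auto)
    moreover have "\<delta> * M \<le> c0 / 2"
    proof -
      have "M \<le> M + 1" by simp
      hence "c0 * M \<le> c0 * (M + 1)" using c0 by (intro mult_left_mono) auto
      thus ?thesis using M0 c0 by (simp add: \<delta>_def field_simps)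
    qed
    moreover have "1 - e * D 1 0 \<beta> 0 = (1 - \<eta>t s * D 1 0 \<beta> 0) - (e - \<eta>t s) * D 1 0 \<beta> 0"
      by (simp add: algebra_simps)
    ultimately show ?thesis using lowJ[OF s b] by linarith
  qed
  define L where "L = 2 * M / (c0 / 2) ^ 3"
  have L0: "0 \<le> L" using M0 c0 by (simp add: L_def)
  have lip: "\<bar>1 / (Kf e)\<^sup>2 - 1 / (Kf (\<eta>t s))\<^sup>2\<bar> \<le> L * \<bar>e - \<eta>t s\<bar>" if s: "s \<in> {0..t}" and e: "\<bar>e - \<eta>t s\<bar> \<le> \<delta>" for s e
    unfolding Kf_def L_def
    by (rule K_lip[OF ue_cont ue_int Mu]) (use c0 region[OF s e] region[OF s, of "\<eta>t s"] \<delta> in auto)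
  define d where "d r = \<eta> r - \<eta>t r" for r
  have c\<eta>: "continuous_on {0..<T} \<eta>" using ode DERIV_continuous continuous_on_eq_continuous_within by blast
  have cd: "continuous_on {0..t} d" unfolding d_def[abs_def]
    by (intro continuous_intros continuous_on_subset[OF c\<eta>] continuous_on_subset[OF etat_cont]) (use tt in auto)
  have core: "d s' = 0" if s': "s' \<in> {0..t}" and small: "\<And>r. 0 \<le> r \<Longrightarrow> r < s' \<Longrightarrow> \<bar>d r\<bar> < \<delta>" for s'
  proof -
    have "(d s')\<^sup>2 \<le> exp ((2 * L) * s') * ((d 0)\<^sup>2 + 0 * s')"
    proof (rule gronwall[where E="\<lambda>r. (d r)\<^sup>2"
        and E'="\<lambda>r. 2 * d r * (1 / (Kf (\<eta> r))\<^sup>2 - 1 / (\<phi>1 r)\<^sup>2)"])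
      show "continuous_on {0..s'} (\<lambda>r. (d r)\<^sup>2)"
        by (intro continuous_intros continuous_on_subset[OF cd]) (use s' in auto)
      fix r assume r: "0 < r" "r < s'"
      hence rT: "0 < r" "r < T" "r \<in> {0..<T}" using s' tt by auto
      show "((\<lambda>r. (d r)\<^sup>2) has_real_derivative 2 * d r * (1 / (Kf (\<eta> r))\<^sup>2 - 1 / (\<phi>1 r)\<^sup>2)) (at r)"
        unfolding d_def[abs_def]
        using deriv_at[OF ode[OF rT(3)] rT(1,2)] deriv_at[OF etat_props(3)[OF \<open>nd\<close> rT(3)] rT(1,2)]
        by (auto intro!: derivative_eq_intros simp: d_def)
      have rt: "r \<in> {0..t}" using r s' by auto
      have dr: "\<bar>d r\<bar> < \<delta>" using small r by auto
      have "\<bar>1 / (Kf (\<eta> r))\<^sup>2 - 1 / (\<phi>1 r)\<^sup>2\<bar> \<le> L * \<bar>d r\<bar>"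
        using lip[OF rt, of "\<eta> r"] dr etat_props(1)[OF \<open>nd\<close> rT(3)] by (simp add: d_def)
      hence "d r * (1 / (Kf (\<eta> r))\<^sup>2 - 1 / (\<phi>1 r)\<^sup>2) \<le> L * (d r)\<^sup>2"
      proof -
        assume h: "\<bar>1 / (Kf (\<eta> r))\<^sup>2 - 1 / (\<phi>1 r)\<^sup>2\<bar> \<le> L * \<bar>d r\<bar>"
        have "d r * (1 / (Kf (\<eta> r))\<^sup>2 - 1 / (\<phi>1 r)\<^sup>2) \<le> \<bar>d r\<bar> * \<bar>1 / (Kf (\<eta> r))\<^sup>2 - 1 / (\<phi>1 r)\<^sup>2\<bar>"
          by (rule mult_le_abs)
        also have "\<dots> \<le> \<bar>d r\<bar> * (L * \<bar>d r\<bar>)" by (rule mult_left_mono[OF h]) simp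
        also have "\<dots> = L * (d r)\<^sup>2" by (simp add: power2_eq_square abs_mult_self_eq algebra_simps)
        finally show ?thesis .
      qed
      thus "2 * d r * (1 / (Kf (\<eta> r))\<^sup>2 - 1 / (\<phi>1 r)\<^sup>2) \<le> 2 * L * (d r)\<^sup>2 + 0"
        by (simp add: mult.assoc)
    qed (use s' L0 in auto)
    hence "(d s')\<^sup>2 \<le> 0" using \<eta>0 etat0 by (simp add: d_def)
    thus ?thesis by simp
  qed
  define Z where "Z = {s \<in> {0..t}. \<delta> \<le> \<bar>d s\<bar>}"
  have Zempty: "Z = {}"
  proof (rule ccontr)
    assume ne: "Z \<noteq> {}"
    have Zeq: "Z = {0..t} \<inter> (\<lambda>s. \<bar>d s\<bar>) -` {\<delta>..}" by (auto simp: Z_def)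
    have cl: "closed Z" unfolding Zeq
      by (rule continuous_closed_preimage) (auto intro!: continuous_intros cd)
    have bb: "bdd_below Z" by (rule bdd_belowI[of _ 0]) (auto simp: Z_def)
    have s1: "Inf Z \<in> Z" by (rule closed_contains_Inf[OF ne bb cl])
    have "d (Inf Z) = 0"
    proof (rule core)
      show "Inf Z \<in> {0..t}" using s1 by (auto simp: Z_def)
      fix r assume r: "0 \<le> r" "r < Inf Z"
      have "r \<notin> Z" using cInf_lower[OF _ bb, of r] r by auto
      moreover have "r \<in> {0..t}" using r s1 by (auto simp: Z_def)
      ultimately show "\<bar>d r\<bar> < \<delta>" by (auto simp: Z_def)
    qed
    thus False using s1 \<delta> by (auto simp: Z_def)
  qed
  have "d t = 0"
  proof (rule core)
    show "t \<in> {0..t}" using tt by auto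
    fix r assume r: "0 \<le> r" "r < t"
    hence "r \<notin> Z" using Zempty by auto
    thus "\<bar>d r\<bar> < \<delta>" using r by (auto simp: Z_def not_le)
  qed
  thus ?thesis by (simp add: d_def)
qed

end


context lag2 begin

lemma Kbar0_Kf: "Kbar0 \<eta> (\<lambda>a. D 1 0 a 0) s = Kf (\<eta> s)"
  by (simp add: Kbar0_def JJ_def Kf_def)

lemma final:
  assumes \<eta>0: "\<eta> 0 = 0"
    and ode: "\<forall>s\<in>{0..<T}. (\<eta> has_real_derivative 1 / (Kbar0 \<eta> (\<lambda>a. D 1 0 a 0) s)\<^sup>2) (at s within {0..<T})"
    and t: "t \<in> {0..<T}" and \<alpha>: "\<alpha> \<in> {0..1}"
  shows "((\<lambda>a. \<gamma> a t) has_real_derivative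
            (1 / JJ \<eta> (\<lambda>a. D 1 0 a 0) \<alpha> t) * (1 / Kbar0 \<eta> (\<lambda>a. D 1 0 a 0) t)) (at \<alpha> within {0..1})
       \<and> D 2 0 (\<gamma> \<alpha> t) t = D 2 0 \<alpha> 0 * ((1 / JJ \<eta> (\<lambda>a. D 1 0 a 0) \<alpha> t) * (1 / Kbar0 \<eta> (\<lambda>a. D 1 0 a 0) t))
       \<and> D 3 0 (\<gamma> \<alpha> t) t = D 3 0 \<alpha> 0 + \<eta> t * (D 2 0 \<alpha> 0)\<^sup>2 / JJ \<eta> (\<lambda>a. D 1 0 a 0) \<alpha> t
       \<and> sgn (D 2 0 (\<gamma> \<alpha> t) t) = sgn (D 2 0 \<alpha> 0)"
proof -
  define J where "J = JJ \<eta> (\<lambda>a. D 1 0 a 0) \<alpha> t"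
  define K where "K = Kbar0 \<eta> (\<lambda>a. D 1 0 a 0) t"
  have tt: "0 \<le> t" "t < T" using t by auto
  have vpos: "0 < v \<alpha> t" by (rule v_pos)
  have p1: "0 < \<phi>1 t" by (rule phi1_pos)
  have JK: "J = v \<alpha> t / \<phi>1 t \<and> K = \<phi>1 t \<and> \<eta> t * (D 2 0 \<alpha> 0)\<^sup>2 / J = \<phi>2 t * (D 2 0 \<alpha> 0)\<^sup>2 / v \<alpha> t"
  proof (cases nd)
    case True
    have "\<eta> t = \<eta>t t"
    proof (rule eta_eq[where \<eta>=\<eta>, OF True \<eta>0 _ t])
      fix s assume "s \<in> {0..<T}"
      thus "(\<eta> has_real_derivative 1 / (Kf (\<eta> s))\<^sup>2) (at s within {0..<T})" using ode Kbar0_Kf by auto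
    qed
    hence J: "J = v \<alpha> t / \<phi>1 t" using etat_props(2)[OF True t \<alpha>] by (simp add: J_def JJ_def)
    moreover have "K = \<phi>1 t" unfolding K_def Kbar0_Kf using \<open>\<eta> t = \<eta>t t\<close> etat_props(1)[OF True t] by simp
    moreover have "\<eta> t * (D 2 0 \<alpha> 0)\<^sup>2 / J = \<phi>2 t * (D 2 0 \<alpha> 0)\<^sup>2 / v \<alpha> t"
      unfolding J \<open>\<eta> t = \<eta>t t\<close> using p1 vpos by (simp add: \<eta>t_def field_simps)
    ultimately show ?thesis by blast
  next
    case False
    have u0: "\<And>\<beta>. \<beta> \<in> {0..1} \<Longrightarrow> D 1 0 \<beta> 0 = 0" using not_nd[OF False] .
    have vc: "\<And>\<beta>. \<beta> \<in> {0..1} \<Longrightarrow> v \<beta> t = \<phi>1 t" using v_repr[OF _ t] u0 by simp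
    have "integral {0..1} (\<lambda>\<beta>. 1 / v \<beta> t) = 1" using int_invv[OF t] by (simp add: has_integral_iff)
    moreover have "integral {0..1} (\<lambda>\<beta>. 1 / v \<beta> t) = integral {0..1} (\<lambda>\<beta>::real. 1 / \<phi>1 t)"
      by (rule integral_cong) (use vc in auto)
    ultimately have "\<phi>1 t = 1" by simp
    have J: "J = 1" using u0[OF \<alpha>] by (simp add: J_def JJ_def)
    have "K = integral {0..1} (\<lambda>\<beta>::real. 1)"
      unfolding K_def Kbar0_Kf Kf_def by (rule integral_cong) (use u0 in auto)
    hence "K = 1" by simp
    moreover have "D 2 0 \<alpha> 0 = 0" by (rule u2_zero[OF False \<alpha>])
    ultimately show ?thesis using J vc[OF \<alpha>] \<open>\<phi>1 t = 1\<close> by simp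
  qed
  have w: "w \<alpha> t = (1 / J) * (1 / K)" using JK vpos p1 by (simp add: wv)
  have d1: "((\<lambda>a. \<gamma> a t) has_real_derivative (1 / J) * (1 / K)) (at \<alpha> within {0..1})"
    using gamma_deriv[OF \<alpha> tt] w by simp
  have d2: "D 2 0 (\<gamma> \<alpha> t) t = D 2 0 \<alpha> 0 * ((1 / J) * (1 / K))"
    using D20_rel[OF \<alpha> t] w by (simp add: wv)
  have d3: "D 3 0 (\<gamma> \<alpha> t) t = D 3 0 \<alpha> 0 + \<eta> t * (D 2 0 \<alpha> 0)\<^sup>2 / J"
  proof -
    have e: "\<eta> t * (D 2 0 \<alpha> 0)\<^sup>2 / J = \<phi>2 t * (D 2 0 \<alpha> 0)\<^sup>2 / v \<alpha> t" using JK by blast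
    show ?thesis using D30_rel[OF \<alpha> t] e by linarith
  qed
  have d4: "sgn (D 2 0 (\<gamma> \<alpha> t) t) = sgn (D 2 0 \<alpha> 0)"
    using D20_rel[OF \<alpha> t] vpos by (simp add: sgn_divide)
  show ?thesis using d1 d2 d3 d4 by (simp add: J_def K_def)
qed

end


lemma sf_bound:
  assumes sf: "smooth_family S D" and K: "compact K" "K \<subseteq> S"
  shows "\<exists>M. \<forall>p\<in>K. \<bar>D i j (fst p) (snd p)\<bar> \<le> M"
proof -
  have "continuous_on K (\<lambda>p. D i j (fst p) (snd p))"
    using continuous_on_subset[OF sf_cont[OF sf] K(2)] .
  hence "compact ((\<lambda>p. D i j (fst p) (snd p)) ` K)" using K(1) by (rule compact_continuous_image)
  hence "bounded ((\<lambda>p. D i j (fst p) (snd p)) ` K)" by (rule compact_imp_bounded)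
  then obtain B where "\<forall>x\<in>(\<lambda>p. D i j (fst p) (snd p)) ` K. norm x \<le> B" by (auto simp: bounded_iff)
  thus ?thesis by auto
qed

lemma per_all:
  assumes sf: "smooth_family (UNIV \<times> {0..<T}) D"
    and per: "\<forall>x. \<forall>t\<in>{0..<T}. D 0 0 (x + 1) t = D 0 0 x t"
  shows "s \<in> {0..<T} \<Longrightarrow> D i j (x + 1) s = D i j x s"
proof (induction j arbitrary: i x s)
  case 0
  then show ?case
  proof (induction i arbitrary: x)
    case 0 thus ?case using per by auto
  next
    case (Suc i)
    have inS: "\<And>r. r \<in> UNIV \<Longrightarrow> (r, s) \<in> UNIV \<times> {0..<T}" using Suc.prems by auto
    have d1: "((\<lambda>z. D i 0 z s) has_real_derivative D (Suc i) 0 x s * 1 + D i (Suc 0) x s * 0) (at x within UNIV)"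
      by (rule sf_chain[OF sf inS]) (auto intro!: derivative_eq_intros)
    have d2: "((\<lambda>z. D i 0 (z + 1) s) has_real_derivative D (Suc i) 0 (x + 1) s * 1 + D i (Suc 0) (x + 1) s * 0) (at x within UNIV)"
      by (rule sf_chain[OF sf, of UNIV "\<lambda>z. z + 1" "\<lambda>z. s"]) (use Suc.prems in \<open>auto intro!: derivative_eq_intros\<close>)
    have eq: "(\<lambda>z. D i 0 (z + 1) s) = (\<lambda>z. D i 0 z s)" using Suc.IH Suc.prems by auto
    show ?case using DERIV_unique[OF d1[simplified] d2[simplified, unfolded eq]] by simp
  qed
next
  case (Suc j)
  have s: "s \<in> {0..<T}" by fact
  have d1: "((\<lambda>r. D i j x r) has_real_derivative D (Suc i) j x r * 0 + D i (Suc j) x r * 1) (at r within {0..<T})"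
    if "r \<in> {0..<T}" for r
    by (rule sf_chain[OF sf, of "{0..<T}" "\<lambda>r. x" "\<lambda>r. r"]) (use that in \<open>auto intro!: derivative_eq_intros\<close>)
  have d2: "((\<lambda>r. D i j (x + 1) r) has_real_derivative D (Suc i) j (x + 1) r * 0 + D i (Suc j) (x + 1) r * 1) (at r within {0..<T})"
    if "r \<in> {0..<T}" for r
    by (rule sf_chain[OF sf, of "{0..<T}" "\<lambda>r. x + 1" "\<lambda>r. r"]) (use that in \<open>auto intro!: derivative_eq_intros\<close>)
  have "((\<lambda>r. D i j x r) has_real_derivative D i (Suc j) (x + 1) s) (at s within {0..<T})"
    by (rule has_field_derivative_transform_within[OF d2[OF s, simplified] zero_less_one s]) (use Suc.IH in auto)
  thus ?case using has_field_derivative_unique[OF d1[OF s, simplified]] nontriv_Ico[OF s] by auto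
qed

lemma per_red:
  assumes sf: "smooth_family (UNIV \<times> {0..<T}) D"
    and per: "\<forall>x. \<forall>t\<in>{0..<T}. D 0 0 (x + 1) t = D 0 0 x t"
  shows "\<exists>y\<in>{0..1}. \<forall>i j s. s \<in> {0..<T} \<longrightarrow> D i j x s = D i j y s"
proof -
  note P = per_all[OF sf per]
  have up: "D i j (y + real n) s = D i j y s" if "s \<in> {0..<T}" for y n i j s
  proof (induction n)
    case (Suc n)
    have "D i j (y + real (Suc n)) s = D i j (y + real n + 1) s" by (simp add: algebra_simps)
    also have "\<dots> = D i j (y + real n) s" using P[OF that] by simp
    finally show ?case using Suc by simp
  qed simp
  have dn: "D i j (y - real n) s = D i j y s" if "s \<in> {0..<T}" for y n i j s
  proof (induction n)
    case (Suc n)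
    have "D i j (y - real (Suc n) + 1) s = D i j (y - real (Suc n)) s" by (rule P[OF that])
    moreover have "y - real (Suc n) + 1 = y - real n" by simp
    ultimately have "D i j (y - real (Suc n)) s = D i j (y - real n) s" by simp
    thus ?case using Suc by simp
  qed simp
  define y where "y = x - of_int \<lfloor>x\<rfloor>"
  have y01: "y \<in> {0..1}"
  proof -
    have "of_int \<lfloor>x\<rfloor> \<le> x" "x < of_int \<lfloor>x\<rfloor> + 1" by (rule of_int_floor_le) (rule real_of_int_floor_add_one_gt)
    thus ?thesis unfolding y_def atLeastAtMost_iff by linarith
  qed
  have "D i j x s = D i j y s" if s: "s \<in> {0..<T}" for i j s
  proof (cases "\<lfloor>x\<rfloor> \<ge> 0")
    case True
    have "x = y + real (nat \<lfloor>x\<rfloor>)" using True by (simp add: y_def)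
    thus ?thesis using up[OF s] by metis
  next
    case False
    have "x = y - real (nat (- \<lfloor>x\<rfloor>))" using False by (simp add: y_def)
    thus ?thesis using dn[OF s] by metis
  qed
  thus ?thesis using y01 by blast
qed



theorem mainTheorem4:
  fixes D :: "nat \<Rightarrow> nat \<Rightarrow> real \<Rightarrow> real \<Rightarrow> real"
    and \<gamma> :: "real \<Rightarrow> real \<Rightarrow> real"
    and \<eta> :: "real \<Rightarrow> real"
    and T :: real
  defines "u0' \<equiv> (\<lambda>\<alpha>. D 1 0 \<alpha> 0)"
  assumes bc:
    "(smooth_family (UNIV \<times> {0..<T}) D
       \<and> (\<forall>x. \<forall>t\<in>{0..<T}. D 0 0 (x + 1) t = D 0 0 x t))
     \<or> (smooth_family ({0..1} \<times> {0..<T}) D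
       \<and> (\<forall>t\<in>{0..<T}. D 0 0 0 t = 0 \<and> D 0 0 1 t = 0)
       \<and> (\<forall>\<alpha>\<in>{0..1}. \<forall>t\<in>{0..<T}. \<gamma> \<alpha> t \<in> {0..1}))"
    and pde: "\<forall>x\<in>{0..1}. \<forall>t\<in>{0<..<T}.
       D 1 1 x t + D 0 0 x t * D 2 0 x t - (D 1 0 x t)\<^sup>2
         = - 2 * integral {0..1} (\<lambda>y. (D 1 0 y t)\<^sup>2)"
    and flow: "\<forall>\<alpha>\<in>{0..1}. \<gamma> \<alpha> 0 = \<alpha> \<and>
       (\<forall>t\<in>{0..<T}. ((\<gamma> \<alpha>) has_real_derivative D 0 0 (\<gamma> \<alpha> t) t) (at t within {0..<T}))"
    and eta0: "\<eta> 0 = 0"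
    and eta_ode: "\<forall>t\<in>{0..<T}.
       (\<eta> has_real_derivative 1 / (Kbar0 \<eta> u0' t)\<^sup>2) (at t within {0..<T})"
    and t: "t \<in> {0..<T}" and \<alpha>: "\<alpha> \<in> {0..1}"
  shows "((\<lambda>a. \<gamma> a t) has_real_derivative
            (1 / JJ \<eta> u0' \<alpha> t) * (1 / Kbar0 \<eta> u0' t)) (at \<alpha> within {0..1})
       \<and> D 2 0 (\<gamma> \<alpha> t) t = D 2 0 \<alpha> 0 * ((1 / JJ \<eta> u0' \<alpha> t) * (1 / Kbar0 \<eta> u0' t))
       \<and> D 3 0 (\<gamma> \<alpha> t) t = D 3 0 \<alpha> 0 + \<eta> t * (D 2 0 \<alpha> 0)\<^sup>2 / JJ \<eta> u0' \<alpha> t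
       \<and> sgn (D 2 0 (\<gamma> \<alpha> t) t) = sgn (D 2 0 \<alpha> 0)"
proof -
  have T0: "0 < T" using t by auto
  have fl0: "\<And>a. a \<in> {0..1} \<Longrightarrow> \<gamma> a 0 = a" using flow by auto
  have fld: "\<And>a s. a \<in> {0..1} \<Longrightarrow> s \<in> {0..<T} \<Longrightarrow>
       (\<gamma> a has_real_derivative D 0 0 (\<gamma> a s) s) (at s within {0..<T})" using flow by auto
  have ode: "\<forall>s\<in>{0..<T}. (\<eta> has_real_derivative 1 / (Kbar0 \<eta> (\<lambda>a. D 1 0 a 0) s)\<^sup>2) (at s within {0..<T})"
    using eta_ode unfolding u0'_def .
  from bc show ?thesis
  proof
    assume P: "smooth_family (UNIV \<times> {0..<T}) D \<and> (\<forall>x. \<forall>t\<in>{0..<T}. D 0 0 (x + 1) t = D 0 0 x t)"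
    hence sf: "smooth_family (UNIV \<times> {0..<T}) D" and per: "\<forall>x. \<forall>t\<in>{0..<T}. D 0 0 (x + 1) t = D 0 0 x t"
      by auto
    interpret lag D \<gamma> UNIV T
    proof (unfold_locales)
      show "smooth_family (UNIV \<times> {0..<T}) D" by (rule sf)
      show "convex (UNIV :: real set)" by simp
      show "{0..1} \<subseteq> (UNIV :: real set)" by simp
      fix x s :: real assume s: "s \<in> {0<..<T}"
      obtain y where y: "y \<in> {0..1}" "\<And>i j s. s \<in> {0..<T} \<Longrightarrow> D i j x s = D i j y s"
        using per_red[OF sf per, of x] by blast
      have sT: "s \<in> {0..<T}" using s by auto
      show "D 1 1 x s + D 0 0 x s * D 2 0 x s - (D 1 0 x s)\<^sup>2 = - 2 * integral {0..1} (\<lambda>y. (D 1 0 y s)\<^sup>2)"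
        using pde y(1) s y(2)[OF sT] by auto
    next
      fix a :: real assume "a \<in> {0..1}" thus "\<gamma> a 0 = a" by (rule fl0)
    next
      fix a s :: real assume "a \<in> {0..1}" "s \<in> {0..<T}"
      thus "(\<gamma> a has_real_derivative D 0 0 (\<gamma> a s) s) (at s within {0..<T})" by (rule fld)
    next
      fix a s :: real show "\<gamma> a s \<in> UNIV" by simp
    next
      fix b :: real assume b: "0 \<le> b" "b < T"
      have K: "compact ({0..1::real} \<times> {0..b})" "{0..1::real} \<times> {0..b} \<subseteq> UNIV \<times> {0..<T}"
        using b by (auto intro!: compact_Times compact_Icc)
      obtain M1 where M1: "\<forall>p\<in>{0..1} \<times> {0..b}. \<bar>D 1 0 (fst p) (snd p)\<bar> \<le> M1"
        using sf_bound[OF sf K] by blast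
      obtain M2 where M2: "\<forall>p\<in>{0..1} \<times> {0..b}. \<bar>D 2 0 (fst p) (snd p)\<bar> \<le> M2"
        using sf_bound[OF sf K] by blast
      show "\<exists>M. \<forall>x\<in>UNIV. \<forall>s\<in>{0..b}. \<bar>D 1 0 x s\<bar> \<le> M \<and> \<bar>D 2 0 x s\<bar> \<le> M"
      proof (intro exI[of _ "max M1 M2"] ballI)
        fix x s assume s: "s \<in> {0..b}"
        obtain y where y: "y \<in> {0..1}" "\<And>i j s. s \<in> {0..<T} \<Longrightarrow> D i j x s = D i j y s"
          using per_red[OF sf per, of x] by blast
        have sT: "s \<in> {0..<T}" using s b by auto
        show "\<bar>D 1 0 x s\<bar> \<le> max M1 M2 \<and> \<bar>D 2 0 x s\<bar> \<le> max M1 M2"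
          using M1[rule_format, of "(y, s)"] M2[rule_format, of "(y, s)"] y(1) s y(2)[OF sT] by auto
      qed
    qed
    interpret lag2 D \<gamma> UNIV T
    proof (unfold_locales)
      fix s assume s: "s \<in> {0..<T}"
      have "(\<lambda>s. \<gamma> 0 s + 1) s = \<gamma> 1 s"
      proof (rule traj_unique[where c="\<lambda>s. \<gamma> 0 s + 1"])
        show "(1::real) \<in> {0..1}" by simp
        show "\<gamma> 0 0 + 1 = 1" using fl0[of 0] by simp
        fix r assume r: "r \<in> {0..<T}"
        show "\<gamma> 0 r + 1 \<in> UNIV" by simp
        have "((\<lambda>s. \<gamma> 0 s + 1) has_real_derivative D 0 0 (\<gamma> 0 r) r + 0) (at r within {0..<T})"
          by (intro derivative_intros fld) (use r in auto)
        thus "((\<lambda>s. \<gamma> 0 s + 1) has_real_derivative D 0 0 (\<gamma> 0 r + 1) r) (at r within {0..<T})"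
          using per r by simp
      qed (use s in auto)
      thus "\<gamma> 1 s - \<gamma> 0 s = 1" by simp
    next
      show "D 0 0 0 0 = D 0 0 1 0" using per T0 by (metis add_0 atLeastLessThan_iff order_refl)
    next
      show "0 < T" by (rule T0)
    qed
    show ?thesis using final[OF eta0 ode t \<alpha>] unfolding u0'_def .
  next
    assume P: "smooth_family ({0..1} \<times> {0..<T}) D \<and> (\<forall>t\<in>{0..<T}. D 0 0 0 t = 0 \<and> D 0 0 1 t = 0)
       \<and> (\<forall>\<alpha>\<in>{0..1}. \<forall>t\<in>{0..<T}. \<gamma> \<alpha> t \<in> {0..1})"
    hence sf: "smooth_family ({0..1} \<times> {0..<T}) D" and bd: "\<And>t. t \<in> {0..<T} \<Longrightarrow> D 0 0 0 t = 0 \<and> D 0 0 1 t = 0"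
      and inX: "\<And>a t. a \<in> {0..1} \<Longrightarrow> t \<in> {0..<T} \<Longrightarrow> \<gamma> a t \<in> {0..1}"
      by auto
    interpret lag D \<gamma> "{0..1}" T
    proof (unfold_locales)
      show "smooth_family ({0..1} \<times> {0..<T}) D" by (rule sf)
      show "convex {0..1::real}" by simp
      show "{0..1} \<subseteq> {0..1::real}" by simp
      fix x s :: real assume "x \<in> {0..1}" "s \<in> {0<..<T}"
      thus "D 1 1 x s + D 0 0 x s * D 2 0 x s - (D 1 0 x s)\<^sup>2 = - 2 * integral {0..1} (\<lambda>y. (D 1 0 y s)\<^sup>2)"
        using pde by auto
    next
      fix a :: real assume "a \<in> {0..1}" thus "\<gamma> a 0 = a" by (rule fl0)
    next
      fix a s :: real assume "a \<in> {0..1}" "s \<in> {0..<T}"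
      thus "(\<gamma> a has_real_derivative D 0 0 (\<gamma> a s) s) (at s within {0..<T})" by (rule fld)
    next
      fix a s :: real assume "a \<in> {0..1}" "s \<in> {0..<T}" thus "\<gamma> a s \<in> {0..1}" by (rule inX)
    next
      fix b :: real assume b: "0 \<le> b" "b < T"
      have K: "compact ({0..1::real} \<times> {0..b})" "{0..1::real} \<times> {0..b} \<subseteq> {0..1} \<times> {0..<T}"
        using b by (auto intro!: compact_Times compact_Icc)
      obtain M1 where M1: "\<forall>p\<in>{0..1} \<times> {0..b}. \<bar>D 1 0 (fst p) (snd p)\<bar> \<le> M1"
        using sf_bound[OF sf K] by blast
      obtain M2 where M2: "\<forall>p\<in>{0..1} \<times> {0..b}. \<bar>D 2 0 (fst p) (snd p)\<bar> \<le> M2"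
        using sf_bound[OF sf K] by blast
      show "\<exists>M. \<forall>x\<in>{0..1}. \<forall>s\<in>{0..b}. \<bar>D 1 0 x s\<bar> \<le> M \<and> \<bar>D 2 0 x s\<bar> \<le> M"
      proof (intro exI[of _ "max M1 M2"] ballI)
        fix x s assume "x \<in> {0..1::real}" "s \<in> {0..b}"
        thus "\<bar>D 1 0 x s\<bar> \<le> max M1 M2 \<and> \<bar>D 2 0 x s\<bar> \<le> max M1 M2"
          using M1[rule_format, of "(x, s)"] M2[rule_format, of "(x, s)"] by auto
      qed
    qed
    have const: "(\<lambda>s. c) s = \<gamma> c s" if c: "c \<in> {0..1}" "\<And>s. s \<in> {0..<T} \<Longrightarrow> D 0 0 c s = 0"
      and s: "s \<in> {0..<T}" for c s
    proof (rule traj_unique[where c="\<lambda>s. c"])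
      show "c \<in> {0..1}" by (rule c(1))
      fix r assume r: "r \<in> {0..<T}"
      show "c \<in> {0..1}" by (rule c(1))
      show "((\<lambda>s. c) has_real_derivative D 0 0 c r) (at r within {0..<T})"
        using c(2)[OF r] by (simp add: DERIV_const)
    qed (use s in auto)
    interpret lag2 D \<gamma> "{0..1}" T
    proof (unfold_locales)
      fix s assume s: "s \<in> {0..<T}"
      have "0 = \<gamma> 0 s" using const[of 0 s] bd s by auto
      moreover have "1 = \<gamma> 1 s" using const[of 1 s] bd s by auto
      ultimately show "\<gamma> 1 s - \<gamma> 0 s = 1" by simp
    next
      show "D 0 0 0 0 = D 0 0 1 0" using bd[of 0] T0 by simp
    next
      show "0 < T" by (rule T0)
    qed
    show ?thesis using final[OF eta0 ode t \<alpha>] unfolding u0'_def .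
  qed
qed


end
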